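(* For $s,t\in\mathbb R$ let $V(s,t)\subset\mathbb R^5$ be the simplex with vertices $(s,1,\tfrac13,1,1)$, $(s,0,\tfrac13,1,1)$, $(s,2-3t,\tfrac13,0,1)$, $(2-3s,t,0,\tfrac13,0)$, $(0,t,1,\tfrac13,0)$, $(1,t,1,\tfrac13,0)$. If $s,t\in[\tfrac49,\tfrac59]$, then $V(s,t)\subset Q_5$, $d_i(V(s,t))=1$ for $i=1,\dots,5$, $\alpha(V(s,t))=\xi(V(s,t))=5=\xi_5$, every vertex of $Q_5$ lies on the boundary of $5V(s,t)$ (so $V(s,t)$ is a perfect simplex), and each of the six hyperplanes containing the $4$-dimensional faces of $V(s,t)$ cuts off from $Q_5$ (on the side not containing $V(s,t)$) a part of volume $\tfrac13$ (so $V(s,t)$ is equisecting).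
   Context: $Q_n=[0,1]^n$. For a convex body $\Omega$ and $\sigma>0$, $\sigma\Omega$ is the homothetic image with center at the center of gravity of $\Omega$ and ratio $\sigma$. $\xi(S)$ is the minimal $\sigma\ge1$ with $Q_n\subset\sigma S$; $\alpha(S)$ is the minimal $\sigma>0$ such that $Q_n$ lies in a translate of $\sigma S$; $\xi_n$ is the minimum of $\xi(S)$ over nondegenerate simplices $S\subset Q_n$. $d_i(S)$ is the maximal length of a segment in $S$ parallel to the $x_i$-axis. A simplex $S$ is perfect if $S\subset Q_n\subset\xi_nS$ and all vertices of $Q_n$ lie on the boundary of $\xi_nS$. A simplex $S\subset Q_n$ is equisecting if all hyperplanes containing its $(n-1)$-dimensional faces cut off from $Q_n$ (outward from $S$) parts of equal volume. *)

theory Defs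
  imports "HOL-Analysis.Analysis"
begin

definition unit_cube :: "(real^'n) set" where
  "unit_cube = {x. \<forall>i. 0 \<le> x$i \<and> x$i \<le> 1}"

definition cube_vertices :: "(real^'n) set" where
  "cube_vertices = {x. \<forall>i. x$i = 0 \<or> x$i = 1}"

definition center_of_gravity :: "(real^'n) set \<Rightarrow> real^'n" where
  "center_of_gravity \<Omega> = inverse (measure lebesgue \<Omega>) *\<^sub>R integral \<Omega> (\<lambda>x. x)"

definition homot :: "real \<Rightarrow> (real^'n) set \<Rightarrow> (real^'n) set" where
  "homot \<sigma> \<Omega> = (\<lambda>x. center_of_gravity \<Omega> + \<sigma> *\<^sub>R (x - center_of_gravity \<Omega>)) ` \<Omega>"

definition xi :: "(real^'n) set \<Rightarrow> real" where
  "xi S = Inf {\<sigma>. 1 \<le> \<sigma> \<and> unit_cube \<subseteq> homot \<sigma> S}"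

definition alpha :: "(real^'n) set \<Rightarrow> real" where
  "alpha S = Inf {\<sigma>. 0 < \<sigma> \<and> (\<exists>v. unit_cube \<subseteq> (\<lambda>x. v + x) ` homot \<sigma> S)}"

definition nondeg_simplex :: "(real^'n::finite) set \<Rightarrow> bool" where
  "nondeg_simplex S \<longleftrightarrow> (int CARD('n)) simplex S"

definition xi_min :: "'n::finite itself \<Rightarrow> real" where
  "xi_min _ = Inf {xi S | S :: (real^'n) set. nondeg_simplex S \<and> S \<subseteq> unit_cube}"

definition axial_diam :: "'n \<Rightarrow> (real^'n) set \<Rightarrow> real" where
  "axial_diam i S = Sup {norm (x - y) | x y. x \<in> S \<and> y \<in> S \<and> (\<forall>j. j \<noteq> i \<longrightarrow> x$j = y$j)}"

definition perfect_simplex :: "(real^'n::finite) set \<Rightarrow> bool" where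
  "perfect_simplex S \<longleftrightarrow> nondeg_simplex S \<and> S \<subseteq> unit_cube \<and>
     unit_cube \<subseteq> homot (xi_min TYPE('n)) S \<and>
     cube_vertices \<subseteq> frontier (homot (xi_min TYPE('n)) S)"

definition facet_cutoff :: "(real^'n) set \<Rightarrow> real^'n \<Rightarrow> real \<Rightarrow> bool" where
  "facet_cutoff C v c \<longleftrightarrow> (\<exists>a b. a \<noteq> 0 \<and> (\<forall>w\<in>C - {v}. a \<bullet> w = b) \<and> a \<bullet> v < b \<and>
      measure lebesgue (unit_cube \<inter> {x. b < a \<bullet> x}) = c)"

definition equisecting :: "(real^'n) set \<Rightarrow> bool" where
  "equisecting C \<longleftrightarrow> (\<exists>c. \<forall>v\<in>C. facet_cutoff C v c)"

definition Vverts :: "real \<Rightarrow> real \<Rightarrow> (real^5) set" where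
  "Vverts s t = {vector [s, 1, 1/3, 1, 1], vector [s, 0, 1/3, 1, 1],
                 vector [s, 2 - 3 * t, 1/3, 0, 1], vector [2 - 3 * s, t, 0, 1/3, 0],
                 vector [0, t, 1, 1/3, 0], vector [1, t, 1, 1/3, 0]}"

definition V :: "real \<Rightarrow> real \<Rightarrow> (real^5) set" where
  "V s t = convex hull (Vverts s t)"

end

theory Submission
  imports Defs
begin


lemma exhaust_5:
  fixes x :: 5
  shows "x = 1 \<or> x = 2 \<or> x = 3 \<or> x = 4 \<or> x = 5"
proof (induct x)
  case (of_int z)
  then have "z = 0 \<or> z = 1 \<or> z = 2 \<or> z = 3 \<or> z = 4" by fastforce
  then show ?case by auto
qed

lemma forall_5: "(\<forall>i::5. P i) \<longleftrightarrow> P 1 \<and> P 2 \<and> P 3 \<and> P 4 \<and> P 5"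
  by (metis exhaust_5)

lemma UNIV_5: "UNIV = {1, 2, 3, 4, 5::5}"
  using exhaust_5 by auto

lemma sum_5: "sum f (UNIV::5 set) = f 1 + f 2 + f 3 + f 4 + f 5"
  unfolding UNIV_5 by (simp add: ac_simps)

lemma vector_5 [simp]:
 "(vector [a,b,c,d,e] ::('a::zero)^5)$1 = a"
 "(vector [a,b,c,d,e] ::('a::zero)^5)$2 = b"
 "(vector [a,b,c,d,e] ::('a::zero)^5)$3 = c"
 "(vector [a,b,c,d,e] ::('a::zero)^5)$4 = d"
 "(vector [a,b,c,d,e] ::('a::zero)^5)$5 = e"
  unfolding vector_def by simp_all



lemma bary_unique:
  fixes C :: "'a::real_vector set"
  assumes "finite C" "\<not> affine_dependent C" "sum u C = 1" "sum u' C = 1"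
    "(\<Sum>v\<in>C. u v *\<^sub>R v) = (\<Sum>v\<in>C. u' v *\<^sub>R v)"
  shows "\<forall>v\<in>C. u v = u' v"
proof -
  have "sum (\<lambda>v. u v - u' v) C = 0" using assms by (simp add: sum_subtractf)
  moreover have "(\<Sum>v\<in>C. (u v - u' v) *\<^sub>R v) = 0"
    using assms(5) by (simp add: scaleR_diff_left sum_subtractf)
  ultimately show ?thesis using assms(2) affine_dependent_explicit_finite[OF assms(1)] by fastforce
qed

lemma axis_expansion: "(\<Sum>i\<in>UNIV. x$i *\<^sub>R axis i (1::real)) = x"
  using basis_expansion[of x] by (simp add: scalar_mult_eq_scaleR)

lemma bary_exists:
  fixes C :: "(real^'n) set"
  assumes "finite C" "affine hull C = UNIV"
  obtains e m where "\<And>x. sum (\<lambda>v. e v + (\<Sum>i\<in>UNIV. x$i * m i v)) C = 1"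
     "\<And>x. (\<Sum>v\<in>C. (e v + (\<Sum>i\<in>UNIV. x$i * m i v)) *\<^sub>R v) = x"
proof -
  have "\<forall>x. \<exists>u. sum u C = 1 \<and> (\<Sum>v\<in>C. u v *\<^sub>R v) = x"
    using assms affine_hull_finite[OF assms(1)] by blast
  then obtain U where U: "\<And>x. sum (U x) C = 1" "\<And>x. (\<Sum>v\<in>C. U x v *\<^sub>R v) = x" by metis
  define e where "e = U 0"
  define m where "m i v = U (axis i 1) v - U 0 v" for i v
  have sm: "sum (m i) C = 0" for i by (simp add: m_def sum_subtractf U)
  have vm: "(\<Sum>v\<in>C. m i v *\<^sub>R v) = axis i 1" for i
    by (simp add: m_def scaleR_diff_left sum_subtractf U)
  show thesis
  proof (rule that)
    fix x :: "real^'n"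
    show "sum (\<lambda>v. e v + (\<Sum>i\<in>UNIV. x$i * m i v)) C = 1"
    proof -
      have "(\<Sum>v\<in>C. \<Sum>i\<in>UNIV. x $ i * m i v) = (\<Sum>i\<in>UNIV. x $ i * sum (m i) C)"
        by (simp add: sum.swap[of _ C] sum_distrib_left)
      then show ?thesis by (simp add: sum.distrib e_def U sm)
    qed
    have "(\<Sum>v\<in>C. (e v + (\<Sum>i\<in>UNIV. x$i * m i v)) *\<^sub>R v)
        = (\<Sum>v\<in>C. e v *\<^sub>R v) + (\<Sum>i\<in>UNIV. x$i *\<^sub>R (\<Sum>v\<in>C. m i v *\<^sub>R v))"
      by (simp add: scaleR_add_left sum.distrib scaleR_sum_left scaleR_sum_right sum.swap[of _ C])
    also have "\<dots> = x" by (simp add: e_def U vm axis_expansion)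
    finally show "(\<Sum>v\<in>C. (e v + (\<Sum>i\<in>UNIV. x$i * m i v)) *\<^sub>R v) = x" .
  qed
qed



lemma bary_hull_mem:
  fixes C :: "(real^'n) set"
  assumes "finite C" "\<not> affine_dependent C"
    and s1: "\<And>x. sum (bc x) C = 1" and s2: "\<And>x. (\<Sum>v\<in>C. bc x v *\<^sub>R v) = x"
  shows "x \<in> convex hull C \<longleftrightarrow> (\<forall>v\<in>C. 0 \<le> bc x v)"
proof
  assume "x \<in> convex hull C"
  then obtain u where u: "\<forall>v\<in>C. 0 \<le> u v" "sum u C = 1" "(\<Sum>v\<in>C. u v *\<^sub>R v) = x"
    using convex_hull_finite[OF assms(1)] by blast
  have "\<forall>v\<in>C. u v = bc x v" using bary_unique[OF assms(1,2) u(2) s1[of x]] u(3) s2[of x] by simp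
  then show "\<forall>v\<in>C. 0 \<le> bc x v" using u(1) by simp
next
  assume "\<forall>v\<in>C. 0 \<le> bc x v"
  then show "x \<in> convex hull C"
    using convex_hull_finite[OF assms(1)] s1[of x] s2[of x] by blast
qed

lemma max0_diff: "max (a::real) 0 - max (-a) 0 = a" by auto

theorem simplex_lower_bound:
  fixes C :: "(real^'n) set" and w :: "real^'n"
  assumes fin: "finite C" and ind: "\<not> affine_dependent C" and aff: "affine hull C = UNIV"
    and sub: "convex hull C \<subseteq> unit_cube" and sig: "0 < \<sigma>"
    and cov: "unit_cube \<subseteq> (\<lambda>x. w + \<sigma> *\<^sub>R x) ` (convex hull C)"
  shows "real CARD('n) \<le> \<sigma>"
proof -
  obtain e m where s1: "\<And>x. sum (\<lambda>v. e v + (\<Sum>i\<in>UNIV. x$i * m i v)) C = 1"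
     and s2: "\<And>x. (\<Sum>v\<in>C. (e v + (\<Sum>i\<in>UNIV. x$i * m i v)) *\<^sub>R v) = x"
    using bary_exists[OF fin aff] by blast
  define bc where "bc x v = e v + (\<Sum>i\<in>UNIV. x$i * m i v)" for x v
  have b1: "\<And>x. sum (bc x) C = 1" and b2: "\<And>x. (\<Sum>v\<in>C. bc x v *\<^sub>R v) = x"
    using s1 s2 by (simp_all add: bc_def)
  note mem = bary_hull_mem[OF fin ind b1 b2]
  have bcax: "bc (axis i 1) v = e v + m i v" for i v
  proof -
    have "(\<Sum>j\<in>UNIV. axis i (1::real) $ j * m j v) = (\<Sum>j\<in>UNIV. if j = i then m j v else 0)"
      by (rule sum.cong) (auto simp: axis_def)
    then show ?thesis by (simp add: bc_def)
  qed
  have bc0: "bc 0 v = e v" for v by (simp add: bc_def)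
  have sm: "sum (m i) C = 0" for i
    using b1[of "axis i 1"] b1[of 0] by (simp add: bcax bc0 sum.distrib)
  have vm: "(\<Sum>v\<in>C. m i v *\<^sub>R v) = axis i 1" for i
    using b2[of "axis i 1"] b2[of 0] by (simp add: bcax bc0 sum.distrib scaleR_add_left)
  define P where "P i = (\<Sum>v\<in>C. max (m i v) 0)" for i
  define N where "N i = (\<Sum>v\<in>C. max (- m i v) 0)" for i
  have PN: "P i = N i" for i
  proof -
    have "P i - N i = sum (m i) C" by (simp add: P_def N_def max0_diff flip: sum_subtractf)
    then show ?thesis using sm by simp
  qed
  have P1: "1 \<le> P i" for i
  proof -
    have Pnn: "0 \<le> P i" unfolding P_def by (intro sum_nonneg) auto
    have "P i \<noteq> 0"
    proof
      assume "P i = 0"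
      then have "N i = 0" using PN by simp
      have "\<forall>v\<in>C. max (m i v) 0 = 0" using \<open>P i = 0\<close> fin unfolding P_def
        by (subst (asm) sum_nonneg_eq_0_iff) auto
      moreover have "\<forall>v\<in>C. max (- m i v) 0 = 0" using \<open>N i = 0\<close> fin unfolding N_def
        by (subst (asm) sum_nonneg_eq_0_iff) auto
      ultimately have "\<forall>v\<in>C. m i v = 0" by (metis max0_diff diff_self)
      then have "axis i (1::real) = 0" using vm[of i] by simp
      then show False by (simp add: axis_eq_0_iff)
    qed
    with Pnn have Ppos: "0 < P i" by simp
    define A where "A = (\<Sum>v\<in>C. (max (- m i v) 0 / P i) *\<^sub>R v)"
    define B where "B = (\<Sum>v\<in>C. (max (m i v) 0 / P i) *\<^sub>R v)"
    have "A \<in> convex hull C"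
      unfolding convex_hull_finite[OF fin] A_def
      by (rule CollectI, rule exI[of _ "\<lambda>v. max (- m i v) 0 / P i"])
         (use Ppos in \<open>auto simp: PN N_def simp flip: sum_divide_distrib\<close>)
    moreover have "B \<in> convex hull C"
      unfolding convex_hull_finite[OF fin] B_def
      by (rule CollectI, rule exI[of _ "\<lambda>v. max (m i v) 0 / P i"])
         (use Ppos in \<open>auto simp: P_def simp flip: sum_divide_distrib\<close>)
    ultimately have AB: "A \<in> unit_cube" "B \<in> unit_cube" using sub by auto
    have "B - A = (\<Sum>v\<in>C. ((max (m i v) 0 - max (- m i v) 0) / P i) *\<^sub>R v)"
      by (simp add: A_def B_def diff_divide_distrib scaleR_diff_left sum_subtractf)
    also have "\<dots> = (1 / P i) *\<^sub>R (\<Sum>v\<in>C. m i v *\<^sub>R v)"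
      by (simp add: max0_diff scaleR_sum_right)
    finally have "(B - A) $ i = 1 / P i" by (simp add: vm)
    moreover have "(B - A) $ i \<le> 1" using AB unfolding unit_cube_def by (smt (verit) mem_Collect_eq vector_minus_component)
    ultimately have "1 / P i \<le> 1" by simp
    then show ?thesis using Ppos by (simp add: divide_le_eq)
  qed
  have up: "(\<Sum>i\<in>UNIV. max (- m i v) 0) \<le> \<sigma> * bc (- ((1/\<sigma>) *\<^sub>R w)) v" if v: "v \<in> C" for v
  proof -
    define y :: "real^'n" where "y = (\<chi> i. if m i v < 0 then 1 else 0)"
    have "y \<in> unit_cube" by (simp add: y_def unit_cube_def)
    then obtain x where x: "x \<in> convex hull C" "y = w + \<sigma> *\<^sub>R x" using cov by auto
    have xe: "x = (1/\<sigma>) *\<^sub>R (y - w)" using x(2) sig by (simp add: field_simps)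
    have "0 \<le> bc x v" using mem x(1) v by blast
    also have "bc x v = bc (- ((1/\<sigma>) *\<^sub>R w)) v + (1/\<sigma>) * (\<Sum>i\<in>UNIV. y$i * m i v)"
      by (simp add: bc_def xe algebra_simps sum.distrib sum_distrib_left sum_subtractf sum_negf)
    also have "(\<Sum>i\<in>UNIV. y$i * m i v) = - (\<Sum>i\<in>UNIV. max (- m i v) 0)"
      by (simp add: y_def flip: sum_negf, rule sum.cong) auto
    finally show ?thesis using sig by (simp add: field_simps)
  qed
  have "(\<Sum>i\<in>UNIV. P i) = (\<Sum>v\<in>C. \<Sum>i\<in>UNIV. max (- m i v) 0)"
    by (simp add: PN N_def sum.swap[of _ C])
  also have "\<dots> \<le> (\<Sum>v\<in>C. \<sigma> * bc (- ((1/\<sigma>) *\<^sub>R w)) v)"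
    by (rule sum_mono) (rule up)
  also have "\<dots> = \<sigma>" by (simp add: b1 flip: sum_distrib_left)
  finally have "(\<Sum>i\<in>UNIV. P i) \<le> \<sigma>" .
  moreover have "(\<Sum>i\<in>(UNIV::'n set). 1) \<le> (\<Sum>i\<in>UNIV. P i)" by (rule sum_mono) (rule P1)
  ultimately show ?thesis by simp
qed



lemma rot_bij: assumes "0 < N" shows "bij_betw (\<lambda>k. Suc k mod N) {..<N} {..<N}"
proof -
  have m: "Suc a mod N = (if Suc a = N then 0 else Suc a)" if "a < N" for a
    using that by auto
  have "inj_on (\<lambda>k. Suc k mod N) {..<N}"
    by (auto simp: inj_on_def m split: if_splits)
  moreover have "(\<lambda>k. Suc k mod N) ` {..<N} \<subseteq> {..<N}" using assms by auto
  ultimately show ?thesis by (simp add: bij_betw_def endo_inj_surj)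
qed

theorem simplex_centroid:
  fixes C :: "(real^'n::{finite,wellorder}) set"
  assumes fin: "finite C" and ind: "\<not> affine_dependent C" and aff: "affine hull C = UNIV"
  shows "center_of_gravity (convex hull C) = (1 / real (card C)) *\<^sub>R (\<Sum>v\<in>C. v)"
    and "0 < measure lebesgue (convex hull C)"
proof -
  define S where "S = convex hull C"
  define N where "N = card C"
  have "aff_dim C = int (card C) - 1" using ind affine_independent_iff_card by blast
  moreover have "aff_dim C = int CARD('n)"
    using aff by (metis aff_dim_UNIV aff_dim_affine_hull DIM_cart DIM_real mult_1_right)
  ultimately have cardC: "N = CARD('n) + 1" unfolding N_def by linarith
  have N2: "2 \<le> N" using cardC by simp
  have cS: "compact S" unfolding S_def using fin by (simp add: compact_convex_hull finite_imp_compact)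
  have lmS: "S \<in> lmeasurable" using cS lmeasurable_compact by blast
  have "(\<Sum>v\<in>C. (1/real N) *\<^sub>R v) \<in> interior S"
  proof -
    have "\<not> card C \<le> CARD('n)" using cardC N_def by simp
    then show ?thesis
      unfolding S_def interior_convex_hull_explicit[OF ind]
      using N2 by (auto intro!: exI[of _ "\<lambda>v. 1/real N"] simp: N_def)
  qed
  then have "\<not> negligible S" using negligible_convex_interior[of S] by (auto simp: S_def)
  then have pos: "0 < measure lebesgue S"
    using negligible_iff_measure0[OF lmS] measure_nonneg[of lebesgue S] by linarith
  then show "0 < measure lebesgue (convex hull C)" by (simp add: S_def)
  obtain e m where s1: "\<And>x. sum (\<lambda>v. e v + (\<Sum>i\<in>UNIV. x$i * m i v)) C = 1"
     and s2: "\<And>x. (\<Sum>v\<in>C. (e v + (\<Sum>i\<in>UNIV. x$i * m i v)) *\<^sub>R v) = x"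
    using bary_exists[OF fin aff] by blast
  define bc where "bc x v = e v + (\<Sum>i\<in>UNIV. x$i * m i v)" for x v
  have b1: "\<And>x. sum (bc x) C = 1" and b2: "\<And>x. (\<Sum>v\<in>C. bc x v *\<^sub>R v) = x"
    using s1 s2 by (simp_all add: bc_def)
  have uniq: "\<forall>v\<in>C. u v = bc x v" if "sum u C = 1" "(\<Sum>v\<in>C. u v *\<^sub>R v) = x" for u x
    using bary_unique[OF fin ind that(1) b1[of x]] that(2) b2[of x] by simp
  have bcv: "bc v w = (if w = v then 1 else 0)" if "v \<in> C" "w \<in> C" for v w
  proof -
    have "sum (\<lambda>w. if w = v then 1 else 0) C = (1::real)" using that fin by simp
    moreover have "(\<Sum>w\<in>C. (if w = v then 1 else 0) *\<^sub>R w) = v"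
    proof -
      have "(\<Sum>w\<in>C. (if w = v then 1 else 0) *\<^sub>R w) = (\<Sum>w\<in>C. if w = v then w else 0)"
        by (rule sum.cong) auto
      then show ?thesis using that fin by simp
    qed
    ultimately have "\<forall>w\<in>C. (if w = v then 1 else 0) = bc v w" by (rule uniq)
    then show ?thesis using that(2) by simp
  qed
  obtain f where f: "bij_betw f {..<N} C"
    using ex_bij_betw_nat_finite[OF fin] by (auto simp: N_def atLeast0LessThan)
  define \<pi> where "\<pi> v = f (Suc (inv_into {..<N} f v) mod N)" for v
  have pibij: "bij_betw \<pi> C C"
  proof -
    have r: "bij_betw (\<lambda>k. Suc k mod N) {..<N} {..<N}" using rot_bij N2 by simp
    have "bij_betw (inv_into {..<N} f) C {..<N}" by (rule bij_betw_inv_into[OF f])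
    then have "bij_betw ((\<lambda>k. Suc k mod N) \<circ> inv_into {..<N} f) C {..<N}"
      using r by (rule bij_betw_trans)
    then have "bij_betw (f \<circ> ((\<lambda>k. Suc k mod N) \<circ> inv_into {..<N} f)) C C"
      using f by (rule bij_betw_trans)
    moreover have "\<pi> = f \<circ> ((\<lambda>k. Suc k mod N) \<circ> inv_into {..<N} f)" by (rule ext) (simp add: \<pi>_def)
    ultimately show ?thesis by simp
  qed
  have pif: "\<pi> (f k) = f (Suc k mod N)" if "k < N" for k
    using that f by (simp add: \<pi>_def bij_betw_def inv_into_f_f)
  define W where "W i = (\<Sum>v\<in>C. m i v *\<^sub>R \<pi> v)" for i
  define b0 where "b0 = (\<Sum>v\<in>C. e v *\<^sub>R \<pi> v)"
  define L where "L x = (\<Sum>i\<in>UNIV. x$i *\<^sub>R W i)" for x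
  define T where "T x = b0 + L x" for x
  have T_eq: "T x = (\<Sum>v\<in>C. bc x v *\<^sub>R \<pi> v)" for x
    by (simp add: T_def b0_def L_def W_def bc_def scaleR_add_left sum.distrib scaleR_sum_left
        scaleR_sum_right sum.swap[of _ C])
  have linL: "linear L"
    by (rule linearI) (simp_all add: L_def scaleR_add_left sum.distrib scaleR_sum_right)
  have Tv: "T v = \<pi> v" if "v \<in> C" for v
  proof -
    have "T v = (\<Sum>w\<in>C. if w = v then \<pi> w else 0)"
      unfolding T_eq by (rule sum.cong) (use that in \<open>auto simp: bcv\<close>)
    then show ?thesis using that fin by simp
  qed
  have TS: "T ` S = S"
  proof -
    have "T ` S = (\<lambda>y. b0 + y) ` (L ` S)" by (simp add: T_def image_image)
    also have "\<dots> = convex hull ((\<lambda>y. b0 + y) ` (L ` C))"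
      by (simp add: S_def convex_hull_linear_image[OF linL] convex_hull_translation)
    also have "(\<lambda>y. b0 + y) ` (L ` C) = T ` C" by (simp add: T_def image_image)
    also have "\<dots> = \<pi> ` C" using Tv by simp
    also have "\<dots> = C" using pibij by (simp add: bij_betw_def)
    finally show ?thesis by (simp add: S_def)
  qed
  have "measure lebesgue (T ` S) = \<bar>det (matrix L)\<bar> * measure lebesgue S"
  proof -
    have "T ` S = (+) b0 ` (L ` S)" by (simp add: T_def image_image)
    then show ?thesis using measure_translation[of b0 "L ` S"] measure_linear_image[OF linL lmS] by simp
  qed
  then have det1: "\<bar>det (matrix L)\<bar> = 1" using TS pos by simp
  then have "inj L" using det_nz_iff_inj[OF linL] by auto
  then have injT: "inj_on T S" by (simp add: T_def inj_on_def inj_def)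
  have derT: "(T has_derivative L) (at x within S)" for x
  proof -
    have "((\<lambda>x. b0 + L x) has_derivative (\<lambda>h. 0 + L h)) (at x within S)"
      by (intro has_derivative_add has_derivative_const linear_imp_has_derivative linL)
    then show ?thesis by (simp add: T_def[abs_def])
  qed
  have absS: "(\<lambda>x. x) absolutely_integrable_on S"
  proof -
    obtain a where "S \<subseteq> cbox (-a) a" using cS compact_imp_bounded bounded_subset_cbox_symmetric by metis
    moreover have "(\<lambda>x. x) absolutely_integrable_on cbox (-a) a"
      by (intro absolutely_integrable_continuous continuous_on_id)
    ultimately show ?thesis using set_integrable_subset lmS by blast
  qed
  have intS: "(\<lambda>x. x) integrable_on S" using absS set_lebesgue_integral_eq_integral(1) by blast
  define I where "I = integral S (\<lambda>x. x)"
  have "I = integral (T ` S) (\<lambda>x. x)" by (simp add: TS I_def)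
  also have "\<dots> = integral S (\<lambda>x. \<bar>det (matrix L)\<bar> *\<^sub>R T x)"
    by (rule integral_change_of_variables[OF _ derT injT]) (use lmS absS TS in auto)
  also have "\<dots> = integral S (\<lambda>x. b0 + L x)" by (simp add: det1 T_def)
  also have "\<dots> = integral S (\<lambda>x. b0) + integral S L"
  proof (rule integral_add)
    show "(\<lambda>x. b0) integrable_on S"
      using lmS lmeasurable_iff_integrable_on integrable_linear[OF _ bounded_linear_scaleR_left, of "\<lambda>x. 1" S b0]
      by (auto simp: o_def)
    show "L integrable_on S"
      using integrable_linear[OF intS linear_conv_bounded_linear[THEN iffD1, OF linL]] by (simp add: o_def)
  qed
  also have "integral S (\<lambda>x. b0) = measure lebesgue S *\<^sub>R b0"
  proof -
    have "(\<lambda>x. 1::real) integrable_on S" using lmS lmeasurable_iff_integrable_on by blast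
    from integral_linear[OF this bounded_linear_scaleR_left, of b0]
    show ?thesis using lmeasure_integral[OF lmS] by (simp add: o_def)
  qed
  also have "integral S L = L I"
    using integral_linear[OF intS linear_conv_bounded_linear[THEN iffD1, OF linL]]
    by (simp add: o_def I_def)
  finally have Ieq: "I = measure lebesgue S *\<^sub>R b0 + L I" .
  define c where "c = inverse (measure lebesgue S) *\<^sub>R I"
  have Tc: "T c = c"
  proof -
    have "T c = b0 + inverse (measure lebesgue S) *\<^sub>R L I"
      by (simp add: T_def c_def linear_cmul[OF linL])
    also have "L I = I - measure lebesgue S *\<^sub>R b0" using Ieq by (simp add: algebra_simps)
    finally show ?thesis using pos by (simp add: c_def algebra_simps)
  qed
  define \<rho> where "\<rho> = inv_into C \<pi>"
  have rhobij: "bij_betw \<rho> C C" using pibij bij_betw_inv_into by (metis \<rho>_def bij_betw_def)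
  have pirho: "\<pi> (\<rho> w) = w" if "w \<in> C" for w
    using that pibij by (simp add: \<rho>_def bij_betw_def f_inv_into_f)
  have rhopi: "\<rho> (\<pi> v) = v" if "v \<in> C" for v
    using that pibij by (simp add: \<rho>_def bij_betw_def inv_into_f_f)
  have "(\<Sum>w\<in>C. bc c (\<rho> w) *\<^sub>R w) = (\<Sum>w\<in>C. bc c (\<rho> w) *\<^sub>R \<pi> (\<rho> w))"
    by (rule sum.cong) (simp_all add: pirho)
  also have "\<dots> = (\<Sum>v\<in>C. bc c v *\<^sub>R \<pi> v)"
    by (rule sum.reindex_bij_betw[OF rhobij])
  also have "\<dots> = c" using Tc T_eq by simp
  finally have e1: "(\<Sum>w\<in>C. bc c (\<rho> w) *\<^sub>R w) = c" .
  have e2: "sum (\<lambda>w. bc c (\<rho> w)) C = 1"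
    using sum.reindex_bij_betw[OF rhobij, of "bc c"] b1 by simp
  have shift: "bc c v = bc c (\<pi> v)" if "v \<in> C" for v
  proof -
    have "\<pi> v \<in> C" using that pibij bij_betwE by blast
    then show ?thesis using uniq[OF e2 e1] rhopi[OF that] by force
  qed
  have allk: "bc c (f k) = bc c (f 0)" if "k < N" for k
    using that
  proof (induction k)
    case (Suc k)
    then have "f k \<in> C" using f bij_betwE by fastforce
    have "k < N" using Suc by simp
    then have "bc c (f k) = bc c (f (Suc k mod N))" using shift[OF \<open>f k \<in> C\<close>] pif[of k] by simp
    then show ?case using Suc by simp
  qed simp
  have "1 = sum (bc c) C" using b1 by simp
  also have "\<dots> = (\<Sum>k<N. bc c (f k))" using sum.reindex_bij_betw[OF f, of "bc c"] by simp
  also have "\<dots> = (\<Sum>k<N. bc c (f 0))" by (rule sum.cong[OF refl], rule allk) simp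
  also have "\<dots> = N * bc c (f 0)" by simp
  finally have v0: "bc c (f 0) = 1 / real N" using N2 by (simp add: field_simps)
  have allv: "bc c v = 1 / real N" if "v \<in> C" for v
  proof -
    have "v \<in> f ` {..<N}" using f that by (simp add: bij_betw_def)
    then obtain k where "k < N" "v = f k" by auto
    then show ?thesis using allk[OF \<open>k < N\<close>] v0 by simp
  qed
  have "c = (\<Sum>v\<in>C. bc c v *\<^sub>R v)" using b2 by simp
  also have "\<dots> = (\<Sum>v\<in>C. (1/real N) *\<^sub>R v)" by (rule sum.cong) (simp_all add: allv)
  finally show "center_of_gravity (convex hull C) = (1 / real (card C)) *\<^sub>R (\<Sum>v\<in>C. v)"
    by (simp add: center_of_gravity_def c_def I_def S_def N_def scaleR_sum_right)
qed



lemma unit_cube_cbox: "unit_cube = cbox (0::real^'n) 1"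
  by (auto simp: unit_cube_def mem_box_cart)

lemma measure_cbox_cart:
  fixes a b :: "real^'n"
  assumes "\<And>i. a$i \<le> b$i"
  shows "measure lebesgue (cbox a b) = (\<Prod>i\<in>UNIV. b$i - a$i)"
proof -
  have "a \<in> cbox a b" using assms by (simp add: mem_box_cart)
  then have "cbox a b \<noteq> {}" by blast
  then show ?thesis by (simp add: content_cbox_cart measure_completion)
qed

lemma measure_reflect_translate:
  fixes S :: "(real^'n::{finite,wellorder}) set"
  assumes "S \<in> lmeasurable"
  shows "measure lebesgue ((\<lambda>x. p - x) ` S) = measure lebesgue S"
proof -
  have ot: "orthogonal_transformation (\<lambda>x. - (\<lambda>x. x) x)"
    using orthogonal_transformation_neg[of "\<lambda>x. x"] orthogonal_transformation_id by blast
  have "(\<lambda>x. p - x) ` S = (+) p ` ((\<lambda>x. - (\<lambda>x. x) x) ` S)" by (auto simp: image_image)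
  then show ?thesis using measure_translation measure_orthogonal_image[OF ot assms] by metis
qed

lemma lmeasurable_reflect_translate:
  fixes S :: "(real^'n::{finite,wellorder}) set"
  assumes "S \<in> lmeasurable"
  shows "(\<lambda>x. p - x) ` S \<in> lmeasurable"
proof -
  have ot: "orthogonal_transformation (\<lambda>x. - (\<lambda>x. x) x)"
    using orthogonal_transformation_neg[of "\<lambda>x. x"] orthogonal_transformation_id by blast
  have "(\<lambda>x. p - x) ` S = (+) p ` ((\<lambda>x. - (\<lambda>x. x) x) ` S)" by (auto simp: image_image)
  then show ?thesis using measurable_translation measurable_orthogonal_image[OF ot assms] by metis
qed

lemma closed_lin_le:
  fixes g h :: "real^'n \<Rightarrow> real"
  assumes "continuous_on UNIV g" "continuous_on UNIV h"
  shows "closed {x. g x \<le> h x}"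
  using closed_Collect_le[OF assms] by simp

lemma cont_aff: "continuous_on UNIV (\<lambda>x::real^'n. r + (\<Sum>i\<in>UNIV. a i * x$i))"
  by (intro continuous_intros)

lemma hyper_neg:
  fixes k :: "'n::finite" and a :: "'n \<Rightarrow> real"
  assumes "a k = 0"
  shows "negligible {y::real^'n. y$k = r + (\<Sum>i\<in>UNIV. a i * y$i)}"
proof -
  define v :: "real^'n" where "v = axis k 1 - (\<chi> i. a i)"
  have "v \<noteq> 0" using assms by (auto simp: v_def vec_eq_iff axis_def)
  moreover have "{y::real^'n. y$k = r + (\<Sum>i\<in>UNIV. a i * y$i)} = {y. v \<bullet> y = r}"
  proof -
    have "v \<bullet> y = y$k - (\<Sum>i\<in>UNIV. a i * y$i)" for y
    proof -
      have "v \<bullet> y = (\<Sum>i\<in>UNIV. (if i = k then y$i else 0) - a i * y$i)"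
        unfolding inner_vec_def by (rule sum.cong) (auto simp: v_def axis_def algebra_simps)
      then show ?thesis by (simp add: sum_subtractf)
    qed
    then show ?thesis by auto
  qed
  ultimately show ?thesis using negligible_hyperplane by metis
qed



lemma cut_measure_le:
  fixes a :: "'n::{finite,wellorder} \<Rightarrow> real" and k :: 'n
  assumes ak: "a k = 0"
   and g01: "\<And>x. x \<in> unit_cube \<Longrightarrow> 0 \<le> r + (\<Sum>i\<in>UNIV. a i * x$i) \<and> r + (\<Sum>i\<in>UNIV. a i * x$i) \<le> 1"
  shows "measure lebesgue {x\<in>unit_cube. x$k \<le> r + (\<Sum>i\<in>UNIV. a i * x$i)} = r + (\<Sum>i\<in>UNIV. a i)/2"
proof -
  define g where "g x = r + (\<Sum>i\<in>UNIV. a i * x$i)" for x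
  define gc where "gc = r + (\<Sum>i\<in>UNIV. a i)/2"
  have gb: "0 \<le> g y \<and> g y \<le> 1" if "\<forall>i. i \<noteq> k \<longrightarrow> 0 \<le> y$i \<and> y$i \<le> 1" for y
  proof -
    define y' where "y' = (\<chi> i. if i = k then 0 else y$i)"
    have "y' \<in> unit_cube" using that by (simp add: y'_def unit_cube_def)
    moreover have "g y' = g y" unfolding g_def
      by (rule arg_cong[where f="\<lambda>z. r + z"], rule sum.cong) (auto simp: y'_def ak)
    ultimately show ?thesis using g01 g_def by metis
  qed
  have "(\<chi> i. 1/2) \<in> (unit_cube :: (real^('n::{finite,wellorder})) set)" by (simp add: unit_cube_def)
  moreover have "g (\<chi> i. 1/2) = gc" by (simp add: g_def gc_def sum_divide_distrib)
  ultimately have gc01: "0 \<le> gc" "gc \<le> 1" using g01 g_def by metis+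
  define p :: "real^('n::{finite,wellorder})" where "p = (\<chi> i. if i = k then 2*gc else 1)"
  have sap: "(\<Sum>i\<in>UNIV. a i * p$i) = (\<Sum>i\<in>UNIV. a i)"
    by (rule sum.cong) (auto simp: p_def ak)
  have gp: "g (p - y) = 2*gc - g y" for y
    by (simp add: g_def gc_def right_diff_distrib sum_subtractf sap)
  define A where "A = {x\<in>unit_cube. x$k \<le> g x}"
  define B where "B = {x\<in>unit_cube. x$k \<le> gc}"
  have contg: "continuous_on UNIV g" unfolding g_def[abs_def] by (intro continuous_intros)
  have clA: "closed A"
  proof -
    have "A = unit_cube \<inter> {x. x$k \<le> g x}" by (auto simp: A_def)
    moreover have "closed {x::real^('n::{finite,wellorder}). x$k \<le> g x}"
      by (rule closed_lin_le[OF _ contg]) (intro continuous_intros)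
    ultimately show ?thesis by (simp add: unit_cube_cbox closed_Int closed_cbox)
  qed
  have clB: "closed B"
  proof -
    have "B = unit_cube \<inter> {x. x$k \<le> gc}" by (auto simp: B_def)
    moreover have "closed {x::real^('n::{finite,wellorder}). x$k \<le> gc}"
      by (rule closed_lin_le) (intro continuous_intros)+
    ultimately show ?thesis by (simp add: unit_cube_cbox closed_Int closed_cbox)
  qed
  have bdd: "bounded X" if "X \<subseteq> unit_cube" for X :: "(real^('n::{finite,wellorder})) set"
    using that bounded_subset bounded_cbox unit_cube_cbox by metis
  have lA: "A \<in> lmeasurable" using clA bdd[of A] by (intro lmeasurable_compact) (auto simp: A_def compact_eq_bounded_closed)
  have lB: "B \<in> lmeasurable" using clB bdd[of B] by (intro lmeasurable_compact) (auto simp: B_def compact_eq_bounded_closed)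
  have lAB: "A - B \<in> lmeasurable" using lA lB by auto
  have lAiB: "A \<inter> B \<in> lmeasurable" using lA lB by auto
  define D where "D = (\<lambda>y. p - y) ` (A - B)"
  have Deq: "D = {y\<in>unit_cube. g y \<le> y$k \<and> y$k < gc}"
  proof -
    have memD: "y \<in> D \<longleftrightarrow> p - y \<in> A - B" for y
    proof
      assume "y \<in> D"
      then obtain x where "x \<in> A - B" "y = p - x" unfolding D_def by blast
      then show "p - y \<in> A - B" by simp
    next
      assume "p - y \<in> A - B"
      moreover have "y = p - (p - y)" by simp
      ultimately show "y \<in> D" unfolding D_def by (rule rev_image_eqI)
    qed
    have "p - y \<in> A - B \<longleftrightarrow> y \<in> unit_cube \<and> g y \<le> y$k \<and> y$k < gc" for y
    proof
      assume h: "p - y \<in> A - B"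
      then have pq: "p - y \<in> unit_cube" and c1: "gc < (p - y)$k" and c2: "(p - y)$k \<le> g (p - y)"
        by (simp_all add: A_def B_def not_le)
      have oth: "\<forall>i. i \<noteq> k \<longrightarrow> 0 \<le> y$i \<and> y$i \<le> 1"
      proof (intro allI impI)
        fix i assume "i \<noteq> k"
        have "0 \<le> (p-y)$i \<and> (p-y)$i \<le> 1" using pq by (simp add: unit_cube_def)
        moreover have "(p-y)$i = 1 - y$i" using \<open>i \<noteq> k\<close> by (simp add: p_def)
        ultimately show "0 \<le> y$i \<and> y$i \<le> 1" by linarith
      qed
      have pk: "(p - y)$k = 2*gc - y$k" by (simp add: p_def)
      have yk: "g y \<le> y$k" "y$k < gc" using c1 c2 gp[of y] pk by linarith+
      moreover have "0 \<le> g y" using gb[OF oth] by simp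
      ultimately have "\<forall>i. 0 \<le> y$i \<and> y$i \<le> 1"
      proof (intro allI)
        fix i show "0 \<le> y$i \<and> y$i \<le> 1"
        proof (cases "i = k")
          case True then show ?thesis using yk \<open>0 \<le> g y\<close> gc01 by simp
        next
          case False then show ?thesis using oth by simp
        qed
      qed
      then have "y \<in> unit_cube" by (simp add: unit_cube_def)
      then show "y \<in> unit_cube \<and> g y \<le> y$k \<and> y$k < gc" using yk by simp
    next
      assume h: "y \<in> unit_cube \<and> g y \<le> y$k \<and> y$k < gc"
      have oth: "\<forall>i. i \<noteq> k \<longrightarrow> 0 \<le> (p - y)$i \<and> (p - y)$i \<le> 1"
        using h by (simp add: unit_cube_def p_def)
      have "g (p - y) \<le> 1" using gb[OF oth] by simp
      then have "(p - y)$k \<le> 1" using h gp[of y] by (simp add: p_def)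
      moreover have "0 \<le> (p - y)$k" using h gc01 by (simp add: p_def)
      ultimately have "\<forall>i. 0 \<le> (p - y)$i \<and> (p - y)$i \<le> 1"
      proof (intro allI)
        fix i show "0 \<le> (p - y)$i \<and> (p - y)$i \<le> 1"
        proof (cases "i = k")
          case True then show ?thesis using \<open>(p - y)$k \<le> 1\<close> \<open>0 \<le> (p - y)$k\<close> by simp
        next
          case False then show ?thesis using oth by simp
        qed
      qed
      then have "p - y \<in> unit_cube" by (simp add: unit_cube_def)
      moreover have "(p - y)$k \<le> g (p - y)" "gc < (p - y)$k" using h gp[of y] by (auto simp: p_def)
      ultimately show "p - y \<in> A - B" unfolding A_def B_def by simp
    qed
    then show ?thesis using memD by (intro set_eqI) (simp only: mem_Collect_eq)
  qed
  have mD: "measure lebesgue D = measure lebesgue (A - B)"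
    unfolding D_def by (rule measure_reflect_translate[OF lAB])
  have negk: "negligible {y::real^('n::{finite,wellorder}). y$k = g y}" unfolding g_def by (rule hyper_neg[of a k, OF ak])
  have negc: "negligible {y::real^('n::{finite,wellorder}). y$k = gc}"
    using hyper_neg[of "\<lambda>i. 0" k gc] by simp
  have lD: "D \<in> lmeasurable" unfolding D_def
    by (rule lmeasurable_reflect_translate[OF lAB])
  have "measure lebesgue (B - A) = measure lebesgue D"
  proof (rule measure_negligible_symdiff[OF lD])
    have "D - (B - A) \<union> ((B - A) - D) \<subseteq> {y. y$k = g y} \<union> {y. y$k = gc}"
    proof
      fix y assume "y \<in> D - (B - A) \<union> ((B - A) - D)"
      then show "y \<in> {y. y$k = g y} \<union> {y. y$k = gc}"
        unfolding Deq A_def B_def by (simp add: not_le) linarith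
    qed
    moreover have "negligible ({y. y$k = g y} \<union> {y::real^('n::{finite,wellorder}). y$k = gc})"
      using negk negc by (rule negligible_Un)
    ultimately show "negligible (D - (B - A) \<union> ((B - A) - D))"
      by (rule negligible_subset[rotated])
  qed
  then have BA: "measure lebesgue (B - A) = measure lebesgue (A - B)" using mD by simp
  have "measure lebesgue (A - B) = measure lebesgue A - measure lebesgue (A \<inter> B)"
  proof -
    have "A - B = A - (A \<inter> B)" by auto
    then show ?thesis using measurable_measure_Diff[OF lA, of "A \<inter> B"] lAiB by auto
  qed
  moreover have "measure lebesgue (B - A) = measure lebesgue B - measure lebesgue (A \<inter> B)"
  proof -
    have "B - A = B - (A \<inter> B)" by auto
    then show ?thesis using measurable_measure_Diff[OF lB, of "A \<inter> B"] lAiB by auto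
  qed
  ultimately have mAB: "measure lebesgue A = measure lebesgue B" using BA by simp
  have "B = cbox 0 (\<chi> i. if i = k then gc else 1)"
  proof (rule set_eqI)
    fix x :: "real^('n::{finite,wellorder})"
    have "((\<forall>i. 0 \<le> x$i \<and> x$i \<le> 1) \<and> x$k \<le> gc) \<longleftrightarrow> (\<forall>i. 0 \<le> x$i \<and> x$i \<le> (if i = k then gc else 1))"
    proof
      assume h: "(\<forall>i. 0 \<le> x$i \<and> x$i \<le> 1) \<and> x$k \<le> gc"
      show "\<forall>i. 0 \<le> x$i \<and> x$i \<le> (if i = k then gc else 1)"
      proof
        fix i show "0 \<le> x$i \<and> x$i \<le> (if i = k then gc else 1)"
          using h by (cases "i = k") auto
      qed
    next
      assume h: "\<forall>i. 0 \<le> x$i \<and> x$i \<le> (if i = k then gc else 1)"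
      have "x$k \<le> gc" using h[rule_format, of k] by simp
      moreover have "0 \<le> x$i \<and> x$i \<le> 1" for i
        using h[rule_format, of i] gc01 by (cases "i = k") auto
      ultimately show "(\<forall>i. 0 \<le> x$i \<and> x$i \<le> 1) \<and> x$k \<le> gc" by blast
    qed
    then show "x \<in> B \<longleftrightarrow> x \<in> cbox 0 (\<chi> i. if i = k then gc else 1)"
      unfolding B_def unit_cube_def mem_box_cart by simp
  qed
  moreover have "measure lebesgue (cbox 0 (\<chi> i. if i = k then gc else 1)) = (\<Prod>i\<in>UNIV. (\<chi> i. if i = k then gc else 1)$i - (0::real^('n::{finite,wellorder}))$i)"
    by (rule measure_cbox_cart) (use gc01 in simp)
  moreover have "(\<Prod>i\<in>UNIV. (\<chi> i. if i = k then gc else 1)$i - (0::real^('n::{finite,wellorder}))$i) = gc"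
    by (simp add: prod.delta)
  ultimately have "measure lebesgue B = gc" by simp
  then show ?thesis using mAB by (simp add: A_def g_def gc_def)
qed


lemma cube_lmeasurable: "unit_cube \<in> lmeasurable"
  by (simp add: unit_cube_cbox)

lemma cube_measure: "measure lebesgue (unit_cube :: (real^'n) set) = 1"
proof -
  have "measure lebesgue (cbox (0::real^'n) 1) = (\<Prod>i\<in>UNIV. (1::real^'n)$i - (0::real^'n)$i)"
    by (rule measure_cbox_cart) simp
  then show ?thesis by (simp add: unit_cube_cbox)
qed

lemma cut_sets_lmeasurable:
  fixes a :: "'n::{finite,wellorder} \<Rightarrow> real" and k :: 'n
  shows "{x\<in>unit_cube. x$k \<le> r + (\<Sum>i\<in>UNIV. a i * x$i)} \<in> lmeasurable"
proof -
  have "closed {x::real^('n::{finite,wellorder}). x$k \<le> r + (\<Sum>i\<in>UNIV. a i * x$i)}"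
    by (rule closed_lin_le) (intro continuous_intros)+
  then have "closed (unit_cube \<inter> {x::real^('n::{finite,wellorder}). x$k \<le> r + (\<Sum>i\<in>UNIV. a i * x$i)})"
    by (simp add: unit_cube_cbox closed_Int closed_cbox)
  moreover have "bounded (unit_cube \<inter> {x::real^('n::{finite,wellorder}). x$k \<le> r + (\<Sum>i\<in>UNIV. a i * x$i)})"
    by (simp add: unit_cube_cbox bounded_Int)
  ultimately have "unit_cube \<inter> {x::real^('n::{finite,wellorder}). x$k \<le> r + (\<Sum>i\<in>UNIV. a i * x$i)} \<in> lmeasurable"
    by (intro lmeasurable_compact) (simp add: compact_eq_bounded_closed)
  moreover have "unit_cube \<inter> {x::real^('n::{finite,wellorder}). x$k \<le> r + (\<Sum>i\<in>UNIV. a i * x$i)} = {x\<in>unit_cube. x$k \<le> r + (\<Sum>i\<in>UNIV. a i * x$i)}"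
    by blast
  ultimately show ?thesis by simp
qed

lemma cut_measure_lt:
  fixes a :: "'n::{finite,wellorder} \<Rightarrow> real" and k :: 'n
  assumes ak: "a k = 0"
   and g01: "\<And>x. x \<in> unit_cube \<Longrightarrow> 0 \<le> r + (\<Sum>i\<in>UNIV. a i * x$i) \<and> r + (\<Sum>i\<in>UNIV. a i * x$i) \<le> 1"
  shows "measure lebesgue {x\<in>unit_cube. x$k < r + (\<Sum>i\<in>UNIV. a i * x$i)} = r + (\<Sum>i\<in>UNIV. a i)/2"
proof -
  have "measure lebesgue {x\<in>unit_cube. x$k < r + (\<Sum>i\<in>UNIV. a i * x$i)}
      = measure lebesgue {x\<in>unit_cube. x$k \<le> r + (\<Sum>i\<in>UNIV. a i * x$i)}"
  proof (rule measure_negligible_symdiff[OF cut_sets_lmeasurable])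
    show "negligible ({x\<in>unit_cube. x$k \<le> r + (\<Sum>i\<in>UNIV. a i * x$i)} - {x\<in>unit_cube. x$k < r + (\<Sum>i\<in>UNIV. a i * x$i)} \<union>
        ({x\<in>unit_cube. x$k < r + (\<Sum>i\<in>UNIV. a i * x$i)} - {x\<in>unit_cube. x$k \<le> r + (\<Sum>i\<in>UNIV. a i * x$i)}))"
      by (rule negligible_subset[OF hyper_neg[of a k, OF ak, of r]]) auto
  qed
  then show ?thesis using cut_measure_le[OF ak g01] by simp
qed

lemma cut_measure_gt:
  fixes a :: "'n::{finite,wellorder} \<Rightarrow> real" and k :: 'n
  assumes ak: "a k = 0"
   and g01: "\<And>x. x \<in> unit_cube \<Longrightarrow> 0 \<le> r + (\<Sum>i\<in>UNIV. a i * x$i) \<and> r + (\<Sum>i\<in>UNIV. a i * x$i) \<le> 1"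
  shows "measure lebesgue {x\<in>unit_cube. r + (\<Sum>i\<in>UNIV. a i * x$i) < x$k} = 1 - (r + (\<Sum>i\<in>UNIV. a i)/2)"
proof -
  have "{x\<in>unit_cube. r + (\<Sum>i\<in>UNIV. a i * x$i) < x$k} = unit_cube - {x\<in>unit_cube. x$k \<le> r + (\<Sum>i\<in>UNIV. a i * x$i)}"
    by auto
  moreover have "measure lebesgue (unit_cube - {x\<in>unit_cube. x$k \<le> r + (\<Sum>i\<in>UNIV. a i * x$i)})
     = measure lebesgue (unit_cube::(real^('n::{finite,wellorder})) set) - measure lebesgue {x\<in>unit_cube. x$k \<le> r + (\<Sum>i\<in>UNIV. a i * x$i)}"
    by (rule measurable_measure_Diff[OF cube_lmeasurable]) (use cut_sets_lmeasurable in auto)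
  ultimately show ?thesis using cut_measure_le[OF ak g01] cube_measure by simp
qed



definition vv :: "real \<Rightarrow> real \<Rightarrow> nat \<Rightarrow> real^5" where
  "vv s t k = (if k = 0 then vector [s, 1, 1/3, 1, 1] else
               if k = 1 then vector [s, 0, 1/3, 1, 1] else
               if k = 2 then vector [s, 2 - 3 * t, 1/3, 0, 1] else
               if k = 3 then vector [2 - 3 * s, t, 0, 1/3, 0] else
               if k = 4 then vector [0, t, 1, 1/3, 0] else vector [1, t, 1, 1/3, 0])"

definition lc :: "real \<Rightarrow> real \<Rightarrow> nat \<Rightarrow> real^5" where
  "lc s t j = (if j = 0 then vector [0, 1, 0, 2 - 3*t, 3*t - 4/3] else
               if j = 1 then vector [0, (-1), 0, 3*t - 1, 5/3 - 3*t] else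
               if j = 2 then vector [0, 0, 0, (-1), 2/3] else
               if j = 3 then vector [0, 0, (-1), 0, (-2/3)] else
               if j = 4 then vector [(-1), 0, 3 * s - 1, 0, 3 * s - 5/3] else
                  vector [1, 0, 2 - 3 * s, 0, 4/3 - 3 * s])"

definition l0 :: "real \<Rightarrow> real \<Rightarrow> nat \<Rightarrow> real" where
  "l0 s t j = (if j = 0 then -2/3 else if j = 1 then 1/3 else if j = 2 then 1/3 else
               if j = 3 then 1 else if j = 4 then 2 - 3 * s else 3 * s - 2)"

definition lam :: "real \<Rightarrow> real \<Rightarrow> nat \<Rightarrow> real^5 \<Rightarrow> real" where
  "lam s t j x = l0 s t j + lc s t j \<bullet> x"

lemma inner5: "(a::real^5) \<bullet> x = a$1 * x$1 + a$2 * x$2 + a$3 * x$3 + a$4 * x$4 + a$5 * x$5"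
  by (simp add: inner_vec_def sum_5)

lemma lt6: "(k::nat) < 6 \<longleftrightarrow> k = 0 \<or> k = 1 \<or> k = 2 \<or> k = 3 \<or> k = 4 \<or> k = 5"
  by auto

lemma sum6: "(\<Sum>k<(6::nat). f k) = f 0 + f 1 + f 2 + f 3 + f 4 + (f 5 :: 'a::comm_monoid_add)"
  by (simp add: eval_nat_numeral ac_simps)

lemma lam_vv: "j < 6 \<Longrightarrow> k < 6 \<Longrightarrow> lam s t j (vv s t k) = (if j = k then 1 else 0)"
  unfolding lt6 by (elim disjE) (simp_all add: lam_def vv_def lc_def l0_def inner5 field_simps)

lemma lam_sum: "(\<Sum>k<6. lam s t k x) = 1"
  by (simp add: sum6 lam_def lc_def l0_def inner5) (simp add: field_simps)

lemma lam_comb: "(\<Sum>k<6. lam s t k x *\<^sub>R vv s t k) = x"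
  by (simp add: sum6 lam_def lc_def l0_def inner5 vv_def vec_eq_iff forall_5) (simp_all add: field_simps)



lemma six_set: "{..<(6::nat)} = {0,1,2,3,4,5}" by auto

lemma Vverts_img: "Vverts s t = vv s t ` {..<6}"
  unfolding six_set Vverts_def by (simp add: vv_def) blast

lemma vv_inj: "inj_on (vv s t) {..<6}"
proof (rule inj_onI)
  fix j k assume jk: "j \<in> {..<6}" "k \<in> {..<6}" "vv s t j = vv s t k"
  then have "lam s t j (vv s t j) = lam s t j (vv s t k)" by simp
  then show "j = k" using lam_vv[of j j s t] lam_vv[of j k s t] jk by (auto split: if_splits)
qed

lemma Vfin: "finite (Vverts s t)" by (simp add: Vverts_img)

lemma Vcard: "card (Vverts s t) = 6"
  by (simp add: Vverts_img card_image[OF vv_inj])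

definition bcV :: "real \<Rightarrow> real \<Rightarrow> real^5 \<Rightarrow> real^5 \<Rightarrow> real" where
  "bcV s t x v = lam s t (inv_into {..<6} (vv s t) v) x"

lemma sum_Vverts: "(\<Sum>v\<in>Vverts s t. f v) = (\<Sum>k<6. f (vv s t k))"
  by (simp add: Vverts_img sum.reindex[OF vv_inj])

lemma bcV_vv: "k < 6 \<Longrightarrow> bcV s t x (vv s t k) = lam s t k x"
  by (simp add: bcV_def inv_into_f_f[OF vv_inj])

lemma bcV1: "sum (bcV s t x) (Vverts s t) = 1"
  by (simp add: sum_Vverts bcV_vv lam_sum)

lemma bcV2: "(\<Sum>v\<in>Vverts s t. bcV s t x v *\<^sub>R v) = x"
  by (simp add: sum_Vverts bcV_vv lam_comb)

lemma V_aff_hull: "affine hull (Vverts s t) = UNIV"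
  unfolding affine_hull_finite[OF Vfin] using bcV1[of s t] bcV2[of s t] by blast

lemma V_indep: "\<not> affine_dependent (Vverts s t)"
proof -
  have "aff_dim (Vverts s t) = 5"
  proof -
    have "aff_dim (Vverts s t) = aff_dim (affine hull (Vverts s t))" by simp
    also have "\<dots> = 5" by (simp add: V_aff_hull)
    finally show ?thesis .
  qed
  then show ?thesis by (simp add: affine_independent_iff_card Vfin Vcard)
qed

lemma V_mem: "x \<in> V s t \<longleftrightarrow> (\<forall>k<6. 0 \<le> lam s t k x)"
proof -
  have "x \<in> V s t \<longleftrightarrow> (\<forall>v\<in>Vverts s t. 0 \<le> bcV s t x v)"
    unfolding V_def by (rule bary_hull_mem[OF Vfin V_indep bcV1 bcV2])
  also have "\<dots> \<longleftrightarrow> (\<forall>k<6. 0 \<le> lam s t k x)" by (auto simp: Vverts_img bcV_vv)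
  finally show ?thesis .
qed

lemma V_nondeg: "nondeg_simplex (V s t)"
  unfolding nondeg_simplex_def simplex_def V_def
  using V_indep Vcard by (intro exI[of _ "Vverts s t"]) simp



locale st =
  fixes s t :: real
  assumes s1: "4/9 \<le> s" and s2: "s \<le> 5/9" and t1: "4/9 \<le> t" and t2: "t \<le> 5/9"
begin

lemma vv_cube: "k < 6 \<Longrightarrow> vv s t k \<in> unit_cube"
  unfolding lt6 using s1 s2 t1 t2
  by (elim disjE) (simp_all add: vv_def unit_cube_def forall_5)

lemma V_cube: "V s t \<subseteq> unit_cube"
proof -
  have "Vverts s t \<subseteq> unit_cube" using vv_cube by (auto simp: Vverts_img)
  moreover have "convex (unit_cube :: (real^5) set)" by (simp add: unit_cube_cbox convex_box)
  ultimately show ?thesis unfolding V_def by (rule hull_minimal)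
qed

end

lemma V_centroid: "center_of_gravity (V s t) = (\<chi> i. 1/2)"
proof -
  have "center_of_gravity (V s t) = (1 / real (card (Vverts s t))) *\<^sub>R (\<Sum>v\<in>Vverts s t. v)"
    unfolding V_def by (rule simplex_centroid(1)[OF Vfin V_indep V_aff_hull])
  also have "\<dots> = (\<chi> i. 1/2)"
    by (simp add: Vcard sum_Vverts sum6 vv_def vec_eq_iff forall_5)
  finally show ?thesis .
qed

lemma lam_aff: "lam s t j (a + r *\<^sub>R (y - a)) = (1 - r) * lam s t j a + r * lam s t j y"
  by (simp add: lam_def inner_simps algebra_simps)

lemma lam_half: "j < 6 \<Longrightarrow> lam s t j (\<chi> i. 1/2) = 1/6"
  unfolding lt6 by (elim disjE) (simp_all add: lam_def lc_def l0_def inner5 field_simps)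

lemma homot_mem:
  assumes "center_of_gravity S = c" "\<sigma> \<noteq> 0"
  shows "y \<in> homot \<sigma> S \<longleftrightarrow> c + (1/\<sigma>) *\<^sub>R (y - c) \<in> S"
proof
  assume "y \<in> homot \<sigma> S"
  then obtain x where "x \<in> S" "y = c + \<sigma> *\<^sub>R (x - c)" using assms(1) by (auto simp: homot_def)
  moreover then have "c + (1/\<sigma>) *\<^sub>R (y - c) = x" using assms(2) by simp
  ultimately show "c + (1/\<sigma>) *\<^sub>R (y - c) \<in> S" by simp
next
  assume h: "c + (1/\<sigma>) *\<^sub>R (y - c) \<in> S"
  have "y = c + \<sigma> *\<^sub>R ((c + (1/\<sigma>) *\<^sub>R (y - c)) - c)" using assms(2) by simp
  then show "y \<in> homot \<sigma> S" using h assms(1) unfolding homot_def by blast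
qed

lemma homot5: "homot 5 (V s t) = {y. \<forall>j<6. -2/3 \<le> lam s t j y}"
proof (rule set_eqI)
  fix y
  have "y \<in> homot 5 (V s t) \<longleftrightarrow> (\<chi> i. 1/2) + (1/5) *\<^sub>R (y - (\<chi> i. 1/2)) \<in> V s t"
    by (rule homot_mem[OF V_centroid]) simp
  also have "\<dots> \<longleftrightarrow> (\<forall>j<6. -2/3 \<le> lam s t j y)"
  proof -
    have "0 \<le> 2 / 15 + lam s t k y / 5 \<longleftrightarrow> - (2 / 3) \<le> lam s t k y" for k by linarith
    then show ?thesis by (simp add: V_mem lam_aff lam_half)
  qed
  finally show "y \<in> homot 5 (V s t) \<longleftrightarrow> y \<in> {y. \<forall>j<6. -2/3 \<le> lam s t j y}" by simp
qed



lemma nondeg_data: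
  fixes S :: "(real^'n::{finite,wellorder}) set"
  assumes "nondeg_simplex S"
  obtains C where "finite C" "\<not> affine_dependent C" "affine hull C = UNIV" "S = convex hull C"
proof -
  obtain C where C: "\<not> affine_dependent C" "int (card C) = int CARD('n) + 1" "S = convex hull C"
    using assms unfolding nondeg_simplex_def simplex_def by blast
  have fin: "finite C" using C(1) aff_independent_finite by blast
  have "aff_dim C = int (card C) - 1" using C(1) affine_independent_iff_card by blast
  then have "aff_dim C = int CARD('n)" using C(2) by simp
  then have "affine hull C = UNIV" using aff_dim_eq_full[of C] by simp
  then show thesis using that fin C by blast
qed

lemma homot_image: "(\<lambda>x. v + x) ` homot \<sigma> S = (\<lambda>x. (v + center_of_gravity S - \<sigma> *\<^sub>R center_of_gravity S) + \<sigma> *\<^sub>R x) ` S"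
  by (auto simp: homot_def image_image algebra_simps)

lemma homot_lb:
  fixes S :: "(real^'n::{finite,wellorder}) set"
  assumes "nondeg_simplex S" "S \<subseteq> unit_cube" "0 < \<sigma>" "unit_cube \<subseteq> (\<lambda>x. v + x) ` homot \<sigma> S"
  shows "real CARD('n) \<le> \<sigma>"
proof -
  obtain C where C: "finite C" "\<not> affine_dependent C" "affine hull C = UNIV" "S = convex hull C"
    using nondeg_data[OF assms(1)] by blast
  have "unit_cube \<subseteq> (\<lambda>x. (v + center_of_gravity S - \<sigma> *\<^sub>R center_of_gravity S) + \<sigma> *\<^sub>R x) ` S"
    using assms(4) homot_image[of v \<sigma> S] by simp
  then show ?thesis
    by (intro simplex_lower_bound[OF C(1,2,3)]) (use assms C(4) in auto)
qed

lemma homot_lb0: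
  fixes S :: "(real^'n::{finite,wellorder}) set"
  assumes "nondeg_simplex S" "S \<subseteq> unit_cube" "0 < \<sigma>" "unit_cube \<subseteq> homot \<sigma> S"
  shows "real CARD('n) \<le> \<sigma>"
  using homot_lb[OF assms(1-3), of 0] assms(4) by simp

lemma simplex_cover:
  fixes S :: "(real^'n::{finite,wellorder}) set"
  assumes "nondeg_simplex S"
  shows "\<exists>\<sigma>\<ge>1. unit_cube \<subseteq> homot \<sigma> S"
proof -
  obtain C where fin: "finite C" and ind: "\<not> affine_dependent C" and aff: "affine hull C = UNIV"
    and SC: "S = convex hull C"
    using nondeg_data[OF assms(1)] by blast
  define N where "N = card C"
  have "C \<noteq> {}" using aff by auto
  then have Npos: "0 < N" using fin by (simp add: N_def card_gt_0_iff)
  define c where "c = (1 / real N) *\<^sub>R (\<Sum>v\<in>C. v)"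
  have cS: "center_of_gravity S = c" unfolding SC c_def N_def by (rule simplex_centroid(1)[OF fin ind aff])
  obtain e m where s1: "\<And>x. sum (\<lambda>v. e v + (\<Sum>i\<in>UNIV. x$i * m i v)) C = 1"
     and s2: "\<And>x. (\<Sum>v\<in>C. (e v + (\<Sum>i\<in>UNIV. x$i * m i v)) *\<^sub>R v) = x"
    using bary_exists[OF fin aff] by blast
  define bc where "bc x v = e v + (\<Sum>i\<in>UNIV. x$i * m i v)" for x v
  have b1: "\<And>x. sum (bc x) C = 1" and b2: "\<And>x. (\<Sum>v\<in>C. bc x v *\<^sub>R v) = x"
    using s1 s2 by (simp_all add: bc_def)
  note mem = bary_hull_mem[OF fin ind b1 b2]
  have uniq: "\<forall>v\<in>C. u v = bc x v" if "sum u C = 1" "(\<Sum>v\<in>C. u v *\<^sub>R v) = x" for u x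
    using bary_unique[OF fin ind that(1) b1[of x]] that(2) b2[of x] by simp
  have bcc: "bc c v = 1 / real N" if "v \<in> C" for v
  proof -
    have "sum (\<lambda>v. 1 / real N) C = 1" using Npos by (simp add: N_def)
    moreover have "(\<Sum>v\<in>C. (1 / real N) *\<^sub>R v) = c" by (simp add: c_def scaleR_sum_right)
    ultimately have "\<forall>w\<in>C. 1 / real N = bc c w" by (rule uniq)
    then show ?thesis using that by simp
  qed
  define K where "K = (\<Sum>v\<in>C. \<bar>e v\<bar> + (\<Sum>i\<in>UNIV. \<bar>m i v\<bar>))"
  have bcK: "\<bar>bc y v\<bar> \<le> K" if "y \<in> unit_cube" "v \<in> C" for y v
  proof -
    have "\<bar>bc y v\<bar> \<le> \<bar>e v\<bar> + \<bar>\<Sum>i\<in>UNIV. y$i * m i v\<bar>" by (simp add: bc_def abs_triangle_ineq)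
    also have "\<bar>\<Sum>i\<in>UNIV. y$i * m i v\<bar> \<le> (\<Sum>i\<in>UNIV. \<bar>y$i * m i v\<bar>)" by (rule sum_abs)
    also have "\<dots> \<le> (\<Sum>i\<in>UNIV. \<bar>m i v\<bar>)"
    proof (rule sum_mono)
      fix i
      have "\<bar>y$i\<bar> \<le> 1" using that(1) by (auto simp: unit_cube_def)
      then show "\<bar>y$i * m i v\<bar> \<le> \<bar>m i v\<bar>" by (simp add: abs_mult mult_left_le_one_le)
    qed
    also have "\<bar>e v\<bar> + (\<Sum>i\<in>UNIV. \<bar>m i v\<bar>) \<le> K"
      unfolding K_def by (rule member_le_sum[OF that(2)]) (auto intro!: add_nonneg_nonneg sum_nonneg simp: fin)
    finally show ?thesis by simp
  qed
  have K0: "0 \<le> K" unfolding K_def by (intro sum_nonneg add_nonneg_nonneg) auto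
  define \<sigma> :: real where "\<sigma> = 1 + real N * K"
  have sig1: "1 \<le> \<sigma>" using K0 by (simp add: \<sigma>_def)
  have "unit_cube \<subseteq> homot \<sigma> S"
  proof
    fix y :: "real^('n::{finite,wellorder})" assume y: "y \<in> unit_cube"
    define x where "x = c + (1/\<sigma>) *\<^sub>R (y - c)"
    have "0 \<le> bc x v" if v: "v \<in> C" for v
    proof -
      have "bc x v = (1 - 1/\<sigma>) * bc c v + (1/\<sigma>) * bc y v"
        by (simp add: bc_def x_def algebra_simps sum.distrib sum_distrib_left sum_subtractf)
      also have "\<dots> = ((\<sigma> - 1) / real N + bc y v) / \<sigma>"
        using sig1 Npos by (simp add: bcc[OF v] field_simps)
      finally have eq: "bc x v = ((\<sigma> - 1) / real N + bc y v) / \<sigma>" .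
      have "(\<sigma> - 1) / real N = K" using Npos by (simp add: \<sigma>_def)
      moreover have "- K \<le> bc y v" using bcK[OF y v] by linarith
      ultimately show ?thesis using eq sig1 by simp
    qed
    then have "x \<in> S" using mem SC by blast
    then show "y \<in> homot \<sigma> S" using homot_mem[OF cS, of \<sigma> y] sig1 by (simp add: x_def)
  qed
  then show ?thesis using sig1 by blast
qed

lemma not_interior_aff:
  fixes a :: "real^'n"
  assumes "a \<noteq> 0" "S \<subseteq> {z. c \<le> b + a \<bullet> z}" "b + a \<bullet> y = c"
  shows "y \<notin> interior S"
proof
  assume "y \<in> interior S"
  then obtain e where e: "0 < e" "ball y e \<subseteq> S" using mem_interior by blast
  define z where "z = y - (e / 2 / norm a) *\<^sub>R a"
  have "dist y z = e / 2" using assms(1) e(1) by (simp add: z_def dist_norm)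
  then have "z \<in> S" using e by auto
  then have "c \<le> b + a \<bullet> z" using assms(2) by auto
  also have "b + a \<bullet> z = c - (e/2) * norm a"
    using assms(1,3) by (simp add: z_def inner_diff_right power2_norm_eq_inner[symmetric] power2_eq_square)
  moreover have "0 < (e/2) * norm a" using assms(1) e(1) by simp
  ultimately show False by linarith
qed



context st begin

lemma Q_sub5: "unit_cube \<subseteq> homot 5 (V s t)"
proof
  fix y :: "real^5" assume y: "y \<in> unit_cube"
  have b: "0 \<le> y$i" "y$i \<le> 1" for i using y by (auto simp: unit_cube_def)
  have p1: "0 \<le> (2 - 3*t) * y$4" using t2 b by (intro mult_nonneg_nonneg) auto
  have p2: "0 \<le> (3*t - 4/3) * y$5" using t1 b by (intro mult_nonneg_nonneg) auto
  have p3: "0 \<le> (3*t - 1) * y$4" using t1 b by (intro mult_nonneg_nonneg) auto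
  have p4: "0 \<le> (5/3 - 3*t) * y$5" using t2 b by (intro mult_nonneg_nonneg) auto
  have p5: "0 \<le> (3 * s - 1) * y$3" using s1 b by (intro mult_nonneg_nonneg) auto
  have p6: "0 \<le> (2 - 3 * s) * y$3" using s2 b by (intro mult_nonneg_nonneg) auto
  have p7: "0 \<le> (3 * s - 5/3) * (y$5 - 1)" using s2 b by (intro mult_nonpos_nonpos) auto
  have p8: "0 \<le> (4/3 - 3 * s) * (y$5 - 1)" using s1 b by (intro mult_nonpos_nonpos) auto
  have e0: "lam s t 0 y = y$2 + (2 - 3*t) * y$4 + (3*t - 4/3) * y$5 - 2/3"
    by (simp add: lam_def lc_def l0_def inner5 field_simps)
  have e1: "lam s t 1 y = - y$2 + (3*t - 1) * y$4 + (5/3 - 3*t) * y$5 + 1/3"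
    by (simp add: lam_def lc_def l0_def inner5 field_simps)
  have e2: "lam s t 2 y = - y$4 + 2/3 * y$5 + 1/3"
    by (simp add: lam_def lc_def l0_def inner5 field_simps)
  have e3: "lam s t 3 y = - y$3 - 2/3 * y$5 + 1"
    by (simp add: lam_def lc_def l0_def inner5 field_simps)
  have e4: "lam s t 4 y = - y$1 + (3 * s - 1) * y$3 + (3 * s - 5/3) * (y$5 - 1) + 1/3"
    by (simp add: lam_def lc_def l0_def inner5 field_simps)
  have e5: "lam s t 5 y = y$1 + (2 - 3 * s) * y$3 + (4/3 - 3 * s) * (y$5 - 1) - 2/3"
    by (simp add: lam_def lc_def l0_def inner5 field_simps)
  have "-2/3 \<le> lam s t j y" if "j < 6" for j
    using that unfolding lt6
  proof (elim disjE)
    assume "j = 0" then show ?thesis using e0 p1 p2 b[of 2] by simp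
  next
    assume "j = 1" then show ?thesis using e1 p3 p4 b[of 2] by simp
  next
    assume "j = 2" then show ?thesis using e2 b[of 4] b[of 5] by simp
  next
    assume "j = 3" then show ?thesis using e3 b[of 3] b[of 5] by simp
  next
    assume "j = 4" then show ?thesis using e4 p5 p7 b[of 1] by simp
  next
    assume "j = 5" then show ?thesis using e5 p6 p8 b[of 1] by simp
  qed
  then show "y \<in> homot 5 (V s t)" by (simp add: homot5)
qed

lemma lc_nz: "lc s t j \<noteq> 0"
proof -
  have "lc s t j $ 1 \<noteq> 0 \<or> lc s t j $ 2 \<noteq> 0 \<or> lc s t j $ 3 \<noteq> 0 \<or> lc s t j $ 4 \<noteq> 0"
    by (simp add: lc_def)
  then show ?thesis by auto
qed

lemma vert_frontier: "cube_vertices \<subseteq> frontier (homot 5 (V s t))"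
proof
  fix y :: "real^5" assume y: "y \<in> cube_vertices"
  then have yv: "y$i = 0 \<or> y$i = 1" for i by (auto simp: cube_vertices_def)
  have "0 \<le> y$i \<and> y$i \<le> 1" for i using yv[of i] by auto
  then have "y \<in> unit_cube" by (simp add: unit_cube_def)
  then have yH: "y \<in> homot 5 (V s t)" using Q_sub5 by blast
  have "\<exists>j<6. lam s t j y = -2/3"
  proof -
    have c: "(y$1 = 0 \<or> y$1 = 1) \<and> (y$2 = 0 \<or> y$2 = 1) \<and> (y$3 = 0 \<or> y$3 = 1) \<and> (y$4 = 0 \<or> y$4 = 1) \<and> (y$5 = 0 \<or> y$5 = 1)"
      using yv by blast
    show ?thesis
    proof (cases "y$5 = 0")
      case True
      show ?thesis
      proof (cases "y$4 = 0")
        case T4: True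
        show ?thesis
        proof (cases "y$2 = 0")
          case True
          then have "lam s t 0 y = -2/3" using T4 \<open>y$5 = 0\<close> by (simp add: lam_def lc_def l0_def inner5)
          then show ?thesis by (intro exI[of _ 0]) simp
        next
          case False
          then have "y$2 = 1" using c by blast
          then have "lam s t 1 y = -2/3" using T4 \<open>y$5 = 0\<close> by (simp add: lam_def lc_def l0_def inner5)
          then show ?thesis by (intro exI[of _ 1]) simp
        qed
      next
        case False
        then have "y$4 = 1" using c by blast
        then have "lam s t 2 y = -2/3" using \<open>y$5 = 0\<close> by (simp add: lam_def lc_def l0_def inner5)
        then show ?thesis by (intro exI[of _ 2]) simp
      qed
    next
      case False
      then have y5: "y$5 = 1" using c by blast
      show ?thesis
      proof (cases "y$3 = 1")
        case True
        then have "lam s t 3 y = -2/3" using y5 by (simp add: lam_def lc_def l0_def inner5)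
        then show ?thesis by (intro exI[of _ 3]) simp
      next
        case False
        then have y3: "y$3 = 0" using c by blast
        show ?thesis
        proof (cases "y$1 = 1")
          case True
          then have "lam s t 4 y = -2/3" using y5 y3 by (simp add: lam_def lc_def l0_def inner5 algebra_simps)
          then show ?thesis by (intro exI[of _ 4]) simp
        next
          case False
          then have "y$1 = 0" using c by blast
          then have "lam s t 5 y = -2/3" using y5 y3 by (simp add: lam_def lc_def l0_def inner5 algebra_simps)
          then show ?thesis by (intro exI[of _ 5]) simp
        qed
      qed
    qed
  qed
  then obtain j where j: "j < 6" "lam s t j y = -2/3" by blast
  have "y \<notin> interior (homot 5 (V s t))"
  proof (rule not_interior_aff[OF lc_nz[of j]])
    show "homot 5 (V s t) \<subseteq> {z. -2/3 \<le> l0 s t j + lc s t j \<bullet> z}"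
      using j(1) by (auto simp: homot5 lam_def)
    show "l0 s t j + lc s t j \<bullet> y = -2/3" using j(2) by (simp add: lam_def)
  qed
  moreover have "y \<in> closure (homot 5 (V s t))" using yH closure_subset by blast
  ultimately show "y \<in> frontier (homot 5 (V s t))" by (simp add: frontier_def)
qed

end



lemma lam_combo:
  assumes "(\<Sum>k<6. c k) = 1" "j < 6"
  shows "lam s t j (\<Sum>k<6. c k *\<^sub>R vv s t k) = c j"
proof -
  have "lc s t j \<bullet> (\<Sum>k<6. c k *\<^sub>R vv s t k) = (\<Sum>k<6. c k * (lam s t j (vv s t k) - l0 s t j))"
    by (simp add: inner_sum_right lam_def)
  also have "\<dots> = (\<Sum>k<6. c k * lam s t j (vv s t k)) - l0 s t j * (\<Sum>k<6. c k)"
    by (simp add: right_diff_distrib sum_subtractf sum_distrib_left mult.commute)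
  also have "(\<Sum>k<6. c k * lam s t j (vv s t k)) = (\<Sum>k<6. if k = j then c k else 0)"
    by (rule sum.cong) (use assms(2) in \<open>auto simp: lam_vv\<close>)
  also have "\<dots> = c j" using assms(2) by simp
  finally show ?thesis using assms(1) by (simp add: lam_def)
qed

lemma combo_in_V:
  assumes "(\<Sum>k<6. c k) = 1" "\<And>k. k < 6 \<Longrightarrow> 0 \<le> c k"
  shows "(\<Sum>k<6. c k *\<^sub>R vv s t k) \<in> V s t"
  using assms by (simp add: V_mem lam_combo)

lemma norm_axis_diff:
  fixes x y :: "real^'n"
  assumes "\<forall>j. j \<noteq> i \<longrightarrow> x$j = y$j"
  shows "norm (x - y) = \<bar>x$i - y$i\<bar>"
proof -
  have "x - y = (x$i - y$i) *\<^sub>R axis i 1"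
    using assms by (auto simp: vec_eq_iff axis_def)
  then show ?thesis by simp
qed

lemma axial_one:
  fixes S :: "(real^'n) set"
  assumes "S \<subseteq> unit_cube" "A \<in> S" "B \<in> S" "B - A = axis i 1"
  shows "axial_diam i S = 1"
  unfolding axial_diam_def
proof (rule cSup_eq_maximum)
  have "\<forall>j. j \<noteq> i \<longrightarrow> B$j = A$j"
  proof (intro allI impI)
    fix j assume "j \<noteq> i"
    have "(B - A)$j = (axis i (1::real))$j" using assms(4) by simp
    then show "B$j = A$j" using \<open>j \<noteq> i\<close> by (simp add: axis_def)
  qed
  moreover have "norm (B - A) = 1" using assms(4) by simp
  ultimately show "1 \<in> {norm (x - y) |x y. x \<in> S \<and> y \<in> S \<and> (\<forall>j. j \<noteq> i \<longrightarrow> x $ j = y $ j)}"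
    using assms(2,3) by (intro CollectI exI[of _ B] exI[of _ A]) simp
next
  fix z assume "z \<in> {norm (x - y) |x y. x \<in> S \<and> y \<in> S \<and> (\<forall>j. j \<noteq> i \<longrightarrow> x $ j = y $ j)}"
  then obtain x y where xy: "z = norm (x - y)" "x \<in> S" "y \<in> S" "\<forall>j. j \<noteq> i \<longrightarrow> x $ j = y $ j" by blast
  have "x \<in> unit_cube" "y \<in> unit_cube" using xy assms(1) by auto
  then have "0 \<le> x$i" "x$i \<le> 1" "0 \<le> y$i" "y$i \<le> 1" by (auto simp: unit_cube_def)
  then show "z \<le> 1" using xy norm_axis_diff[OF xy(4)] by simp
qed



lemma ax5: "axis (1::5) (1::real) = vector [1,0,0,0,0]" "axis (2::5) (1::real) = vector [0,1,0,0,0]"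
  "axis (3::5) (1::real) = vector [0,0,1,0,0]" "axis (4::5) (1::real) = vector [0,0,0,1,0]"
  "axis (5::5) (1::real) = vector [0,0,0,0,1]"
  by (simp_all add: vec_eq_iff forall_5 axis_def)

lemma vv_in_V: "k < 6 \<Longrightarrow> vv s t k \<in> V s t"
  unfolding V_def Vverts_img by (rule hull_subset[THEN subsetD]) simp

context st begin

lemma axial1: "axial_diam 1 (V s t) = 1"
  by (rule axial_one[OF V_cube vv_in_V[of 4] vv_in_V[of 5]]) (simp_all add: ax5 vv_def vec_eq_iff forall_5)

lemma axial2: "axial_diam 2 (V s t) = 1"
  by (rule axial_one[OF V_cube vv_in_V[of 1] vv_in_V[of 0]]) (simp_all add: ax5 vv_def vec_eq_iff forall_5)

lemma axial3: "axial_diam 3 (V s t) = 1"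
proof (rule axial_one[OF V_cube vv_in_V[of 3]])
  define c where "c k = (if k = 4 then 3 * s - 1 else if k = 5 then 2 - 3 * s else 0)" for k :: nat
  show "(\<Sum>k<6. c k *\<^sub>R vv s t k) \<in> V s t"
    by (rule combo_in_V) (use s1 s2 in \<open>auto simp: c_def sum6\<close>)
  show "(\<Sum>k<6. c k *\<^sub>R vv s t k) - vv s t 3 = axis 3 1"
    by (simp add: c_def sum6 ax5 vv_def vec_eq_iff forall_5 field_simps)
qed simp

lemma axial4: "axial_diam 4 (V s t) = 1"
proof (rule axial_one[OF V_cube vv_in_V[of 2]])
  define c where "c k = (if k = 0 then 2 - 3*t else if k = 1 then 3*t - 1 else 0)" for k :: nat
  show "(\<Sum>k<6. c k *\<^sub>R vv s t k) \<in> V s t"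
    by (rule combo_in_V) (use t1 t2 in \<open>auto simp: c_def sum6\<close>)
  show "(\<Sum>k<6. c k *\<^sub>R vv s t k) - vv s t 2 = axis 4 1"
    by (simp add: c_def sum6 ax5 vv_def vec_eq_iff forall_5 field_simps)
qed simp

lemma axial5: "axial_diam 5 (V s t) = 1"
proof -
  define a where "a k = (if k = 3 then 2/3 else if k = 4 then 5/3 - 3 * s else if k = 5 then 3 * s - 4/3 else 0)" for k :: nat
  define b where "b k = (if k = 0 then 3*t - 4/3 else if k = 1 then 5/3 - 3*t else if k = 2 then 2/3 else 0)" for k :: nat
  show ?thesis
  proof (rule axial_one[OF V_cube])
    show "(\<Sum>k<6. a k *\<^sub>R vv s t k) \<in> V s t"
      by (rule combo_in_V) (use s1 s2 in \<open>auto simp: a_def sum6\<close>)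
    show "(\<Sum>k<6. b k *\<^sub>R vv s t k) \<in> V s t"
      by (rule combo_in_V) (use t1 t2 in \<open>auto simp: b_def sum6\<close>)
    show "(\<Sum>k<6. b k *\<^sub>R vv s t k) - (\<Sum>k<6. a k *\<^sub>R vv s t k) = axis 5 1"
      by (simp add: a_def b_def sum6 ax5 vv_def vec_eq_iff forall_5 field_simps)
  qed
qed

lemma axial_all: "axial_diam i (V s t) = 1"
  using exhaust_5[of i] axial1 axial2 axial3 axial4 axial5 by auto

end



lemma cut_vec_lt:
  fixes w :: "real^5" and k :: 5
  assumes "w$k = 0" "\<And>x. x \<in> unit_cube \<Longrightarrow> 0 \<le> r + w \<bullet> x \<and> r + w \<bullet> x \<le> 1"
  shows "measure lebesgue {x\<in>unit_cube. x$k < r + w \<bullet> x} = r + (\<Sum>i\<in>UNIV. w$i)/2"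
  using cut_measure_lt[of "\<lambda>i. w$i" k r] assms by (simp add: inner_vec_def)

lemma cut_vec_gt:
  fixes w :: "real^5" and k :: 5
  assumes "w$k = 0" "\<And>x. x \<in> unit_cube \<Longrightarrow> 0 \<le> r + w \<bullet> x \<and> r + w \<bullet> x \<le> 1"
  shows "measure lebesgue {x\<in>unit_cube. r + w \<bullet> x < x$k} = 1 - (r + (\<Sum>i\<in>UNIV. w$i)/2)"
  using cut_measure_gt[of "\<lambda>i. w$i" k r] assms by (simp add: inner_vec_def)

lemma prod01: "0 \<le> (c::real) \<Longrightarrow> 0 \<le> x \<Longrightarrow> x \<le> 1 \<Longrightarrow> 0 \<le> c * x \<and> c * x \<le> c"
  using mult_left_le_one_le[of c x] mult_nonneg_nonneg[of c x] by (simp add: mult.commute)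

lemma prod01n: "(c::real) \<le> 0 \<Longrightarrow> 0 \<le> x \<Longrightarrow> x \<le> 1 \<Longrightarrow> c \<le> c * x \<and> c * x \<le> 0"
  using prod01[of "-c" x] by simp

lemma cube_b: "x \<in> unit_cube \<Longrightarrow> 0 \<le> x$i \<and> x$i \<le> (1::real)"
  by (simp add: unit_cube_def)

context st begin

lemma meas0: "measure lebesgue (unit_cube \<inter> {x. l0 s t 0 < - lc s t 0 \<bullet> x}) = 1/3"
proof -
  define w :: "real^5" where "w = vector [0, 0, 0, -(2 - 3*t), -(3*t - 4/3)]"
  have "unit_cube \<inter> {x. l0 s t 0 < - lc s t 0 \<bullet> x} = {x\<in>unit_cube. x$2 < 2/3 + w \<bullet> x}"
    by (auto simp: w_def inner5 lc_def l0_def algebra_simps)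
  also have "measure lebesgue \<dots> = 2/3 + (\<Sum>i\<in>UNIV. w$i)/2"
  proof (rule cut_vec_lt)
    fix x :: "real^5" assume x: "x \<in> unit_cube"
    have "0 \<le> (2 - 3*t) * x$4 \<and> (2 - 3*t) * x$4 \<le> 2 - 3*t" using t2 cube_b[OF x, of 4] by (intro prod01) auto
    moreover have "0 \<le> (3*t - 4/3) * x$5 \<and> (3*t - 4/3) * x$5 \<le> 3*t - 4/3" using t1 cube_b[OF x, of 5] by (intro prod01) auto
    moreover have "w \<bullet> x = -((2 - 3*t) * x$4) - (3*t - 4/3) * x$5" by (simp add: w_def inner5 algebra_simps)
    ultimately show "0 \<le> 2/3 + w \<bullet> x \<and> 2/3 + w \<bullet> x \<le> 1" by linarith
  qed (simp add: w_def)
  also have "\<dots> = 1/3" by (simp add: w_def sum_5 field_simps)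
  finally show ?thesis .
qed

lemma meas1: "measure lebesgue (unit_cube \<inter> {x. l0 s t 1 < - lc s t 1 \<bullet> x}) = 1/3"
proof -
  define w :: "real^5" where "w = vector [0, 0, 0, 3*t - 1, 5/3 - 3*t]"
  have "unit_cube \<inter> {x. l0 s t 1 < - lc s t 1 \<bullet> x} = {x\<in>unit_cube. 1/3 + w \<bullet> x < x$2}"
    by (auto simp: w_def inner5 lc_def l0_def algebra_simps)
  also have "measure lebesgue \<dots> = 1 - (1/3 + (\<Sum>i\<in>UNIV. w$i)/2)"
  proof (rule cut_vec_gt)
    fix x :: "real^5" assume x: "x \<in> unit_cube"
    have "0 \<le> (3*t - 1) * x$4 \<and> (3*t - 1) * x$4 \<le> 3*t - 1" using t1 cube_b[OF x, of 4] by (intro prod01) auto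
    moreover have "0 \<le> (5/3 - 3*t) * x$5 \<and> (5/3 - 3*t) * x$5 \<le> 5/3 - 3*t" using t2 cube_b[OF x, of 5] by (intro prod01) auto
    moreover have "w \<bullet> x = (3*t - 1) * x$4 + (5/3 - 3*t) * x$5" by (simp add: w_def inner5 algebra_simps)
    ultimately show "0 \<le> 1/3 + w \<bullet> x \<and> 1/3 + w \<bullet> x \<le> 1" by linarith
  qed (simp add: w_def)
  also have "\<dots> = 1/3" by (simp add: w_def sum_5 field_simps)
  finally show ?thesis .
qed

lemma meas2: "measure lebesgue (unit_cube \<inter> {x. l0 s t 2 < - lc s t 2 \<bullet> x}) = 1/3"
proof -
  define w :: "real^5" where "w = vector [0, 0, 0, 0, 2/3]"
  have "unit_cube \<inter> {x. l0 s t 2 < - lc s t 2 \<bullet> x} = {x\<in>unit_cube. 1/3 + w \<bullet> x < x$4}"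
    by (auto simp: w_def inner5 lc_def l0_def algebra_simps)
  also have "measure lebesgue \<dots> = 1 - (1/3 + (\<Sum>i\<in>UNIV. w$i)/2)"
  proof (rule cut_vec_gt)
    fix x :: "real^5" assume x: "x \<in> unit_cube"
    show "0 \<le> 1/3 + w \<bullet> x \<and> 1/3 + w \<bullet> x \<le> 1" using cube_b[OF x, of 5] by (simp add: w_def inner5)
  qed (simp add: w_def)
  also have "\<dots> = 1/3" by (simp add: w_def sum_5 field_simps)
  finally show ?thesis .
qed

lemma meas3: "measure lebesgue (unit_cube \<inter> {x. l0 s t 3 < - lc s t 3 \<bullet> x}) = 1/3"
proof -
  define w :: "real^5" where "w = vector [0, 0, 0, 0, -2/3]"
  have "unit_cube \<inter> {x. l0 s t 3 < - lc s t 3 \<bullet> x} = {x\<in>unit_cube. 1 + w \<bullet> x < x$3}"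
    by (auto simp: w_def inner5 lc_def l0_def algebra_simps)
  also have "measure lebesgue \<dots> = 1 - (1 + (\<Sum>i\<in>UNIV. w$i)/2)"
  proof (rule cut_vec_gt)
    fix x :: "real^5" assume x: "x \<in> unit_cube"
    show "0 \<le> 1 + w \<bullet> x \<and> 1 + w \<bullet> x \<le> 1" using cube_b[OF x, of 5] by (simp add: w_def inner5)
  qed (simp add: w_def)
  also have "\<dots> = 1/3" by (simp add: w_def sum_5 field_simps)
  finally show ?thesis .
qed

lemma meas4: "measure lebesgue (unit_cube \<inter> {x. l0 s t 4 < - lc s t 4 \<bullet> x}) = 1/3"
proof -
  define w :: "real^5" where "w = vector [0, 0, 3 * s - 1, 0, 3 * s - 5/3]"
  have "unit_cube \<inter> {x. l0 s t 4 < - lc s t 4 \<bullet> x} = {x\<in>unit_cube. (2 - 3 * s) + w \<bullet> x < x$1}"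
    by (auto simp: w_def inner5 lc_def l0_def algebra_simps)
  also have "measure lebesgue \<dots> = 1 - ((2 - 3 * s) + (\<Sum>i\<in>UNIV. w$i)/2)"
  proof (rule cut_vec_gt)
    fix x :: "real^5" assume x: "x \<in> unit_cube"
    have "0 \<le> (3 * s - 1) * x$3 \<and> (3 * s - 1) * x$3 \<le> 3 * s - 1" using s1 cube_b[OF x, of 3] by (intro prod01) auto
    moreover have "3 * s - 5/3 \<le> (3 * s - 5/3) * x$5 \<and> (3 * s - 5/3) * x$5 \<le> 0" using s2 cube_b[OF x, of 5] by (intro prod01n) auto
    moreover have "w \<bullet> x = (3 * s - 1) * x$3 + (3 * s - 5/3) * x$5" by (simp add: w_def inner5 algebra_simps)
    ultimately show "0 \<le> (2 - 3 * s) + w \<bullet> x \<and> (2 - 3 * s) + w \<bullet> x \<le> 1" by linarith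
  qed (simp add: w_def)
  also have "\<dots> = 1/3" by (simp add: w_def sum_5 field_simps)
  finally show ?thesis .
qed

lemma meas5: "measure lebesgue (unit_cube \<inter> {x. l0 s t 5 < - lc s t 5 \<bullet> x}) = 1/3"
proof -
  define w :: "real^5" where "w = vector [0, 0, -(2 - 3 * s), 0, 3 * s - 4/3]"
  have "unit_cube \<inter> {x. l0 s t 5 < - lc s t 5 \<bullet> x} = {x\<in>unit_cube. x$1 < (2 - 3 * s) + w \<bullet> x}"
    by (auto simp: w_def inner5 lc_def l0_def algebra_simps)
  also have "measure lebesgue \<dots> = (2 - 3 * s) + (\<Sum>i\<in>UNIV. w$i)/2"
  proof (rule cut_vec_lt)
    fix x :: "real^5" assume x: "x \<in> unit_cube"
    have "0 \<le> (2 - 3 * s) * x$3 \<and> (2 - 3 * s) * x$3 \<le> 2 - 3 * s" using s2 cube_b[OF x, of 3] by (intro prod01) auto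
    moreover have "0 \<le> (3 * s - 4/3) * x$5 \<and> (3 * s - 4/3) * x$5 \<le> 3 * s - 4/3" using s1 cube_b[OF x, of 5] by (intro prod01) auto
    moreover have "w \<bullet> x = -((2 - 3 * s) * x$3) + (3 * s - 4/3) * x$5" by (simp add: w_def inner5 algebra_simps)
    ultimately show "0 \<le> (2 - 3 * s) + w \<bullet> x \<and> (2 - 3 * s) + w \<bullet> x \<le> 1" using s1 s2 by linarith
  qed (simp add: w_def)
  also have "\<dots> = 1/3" by (simp add: w_def sum_5 field_simps)
  finally show ?thesis .
qed

end



lemma xi_ge5:
  fixes S :: "(real^5) set"
  assumes "nondeg_simplex S" "S \<subseteq> unit_cube"
  shows "5 \<le> xi S"
  unfolding xi_def
proof (rule cInf_greatest)
  show "{\<sigma>. 1 \<le> \<sigma> \<and> unit_cube \<subseteq> homot \<sigma> S} \<noteq> {}" using simplex_cover[OF assms(1)] by auto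
  fix \<sigma> assume "\<sigma> \<in> {\<sigma>. 1 \<le> \<sigma> \<and> unit_cube \<subseteq> homot \<sigma> S}"
  then have "1 \<le> \<sigma>" "unit_cube \<subseteq> homot \<sigma> S" by auto
  then show "5 \<le> \<sigma>" using homot_lb0[OF assms, of \<sigma>] by simp
qed

context st begin

lemma xi_V: "xi (V s t) = 5"
  unfolding xi_def
proof (rule cInf_eq_minimum)
  show "5 \<in> {\<sigma>. 1 \<le> \<sigma> \<and> unit_cube \<subseteq> homot \<sigma> (V s t)}" using Q_sub5 by simp
  fix \<sigma> assume "\<sigma> \<in> {\<sigma>. 1 \<le> \<sigma> \<and> unit_cube \<subseteq> homot \<sigma> (V s t)}"
  then have "1 \<le> \<sigma>" "unit_cube \<subseteq> homot \<sigma> (V s t)" by auto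
  then show "5 \<le> \<sigma>" using homot_lb0[OF V_nondeg V_cube, of \<sigma>] by simp
qed

lemma alpha_V: "alpha (V s t) = 5"
  unfolding alpha_def
proof (rule cInf_eq_minimum)
  have "unit_cube \<subseteq> (\<lambda>x. 0 + x) ` homot 5 (V s t)" using Q_sub5 by simp
  then have "\<exists>v. unit_cube \<subseteq> (\<lambda>x. v + x) ` homot 5 (V s t)" by (rule exI)
  then show "5 \<in> {\<sigma>. 0 < \<sigma> \<and> (\<exists>v. unit_cube \<subseteq> (\<lambda>x. v + x) ` homot \<sigma> (V s t))}" by simp
  fix \<sigma> assume "\<sigma> \<in> {\<sigma>. 0 < \<sigma> \<and> (\<exists>v. unit_cube \<subseteq> (\<lambda>x. v + x) ` homot \<sigma> (V s t))}"
  then obtain v where "0 < \<sigma>" "unit_cube \<subseteq> (\<lambda>x. v + x) ` homot \<sigma> (V s t)" by auto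
  then show "5 \<le> \<sigma>" using homot_lb[OF V_nondeg V_cube, of \<sigma> v] by simp
qed

lemma xi_min5: "xi_min TYPE(5) = 5"
  unfolding xi_min_def
proof (rule cInf_eq_minimum)
  show "5 \<in> {xi S |S :: (real^5) set. nondeg_simplex S \<and> S \<subseteq> unit_cube}"
    using xi_V V_nondeg V_cube by (intro CollectI exI[of _ "V s t"]) simp
  fix z assume "z \<in> {xi S |S :: (real^5) set. nondeg_simplex S \<and> S \<subseteq> unit_cube}"
  then obtain S :: "(real^5) set" where "z = xi S" "nondeg_simplex S" "S \<subseteq> unit_cube" by blast
  then show "5 \<le> z" using xi_ge5 by simp
qed

lemma facet_k: "k < 6 \<Longrightarrow> facet_cutoff (Vverts s t) (vv s t k) (1/3)"
  unfolding facet_cutoff_def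
proof (intro exI[of _ "- lc s t k"] exI[of _ "l0 s t k"] conjI ballI)
  assume k: "k < 6"
  show "- lc s t k \<noteq> 0" using lc_nz[of k] by simp
  fix w assume w: "w \<in> Vverts s t - {vv s t k}"
  then obtain k' where k': "k' < 6" "w = vv s t k'" by (auto simp: Vverts_img)
  then have "k' \<noteq> k" using w by auto
  then have "lam s t k w = 0" using lam_vv[OF k k'(1)] k' by simp
  then show "- lc s t k \<bullet> w = l0 s t k" by (simp add: lam_def)
next
  assume k: "k < 6"
  have "lam s t k (vv s t k) = 1" using lam_vv[OF k k] by simp
  then show "- lc s t k \<bullet> vv s t k < l0 s t k" by (simp add: lam_def)
  show "measure lebesgue (unit_cube \<inter> {x. l0 s t k < - lc s t k \<bullet> x}) = 1/3"
    using k meas0 meas1 meas2 meas3 meas4 meas5 unfolding lt6 by (elim disjE) simp_all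
qed

lemma facets: "\<forall>v\<in>Vverts s t. facet_cutoff (Vverts s t) v (1/3)"
  using facet_k by (auto simp: Vverts_img)

end

theorem mainTheorem5:
  fixes s t :: real
  assumes "4/9 \<le> s" "s \<le> 5/9" "4/9 \<le> t" "t \<le> 5/9"
  shows "nondeg_simplex (V s t) \<and> card (Vverts s t) = 6 \<and>
         V s t \<subseteq> unit_cube \<and>
         (\<forall>i::5. axial_diam i (V s t) = 1) \<and>
         alpha (V s t) = 5 \<and> xi (V s t) = 5 \<and> xi_min TYPE(5) = 5 \<and>
         cube_vertices \<subseteq> frontier (homot 5 (V s t)) \<and>
         perfect_simplex (V s t) \<and>
         (\<forall>v\<in>Vverts s t. facet_cutoff (Vverts s t) v (1/3)) \<and>
         equisecting (Vverts s t)"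
proof -
  interpret st s t using assms by unfold_locales
  have perf: "perfect_simplex (V s t)"
    unfolding perfect_simplex_def using V_nondeg V_cube Q_sub5 vert_frontier xi_min5 by simp
  have eq: "equisecting (Vverts s t)"
    unfolding equisecting_def using facets by blast
  show ?thesis
    using V_nondeg Vcard V_cube axial_all alpha_V xi_V xi_min5 vert_frontier perf facets eq
    by simp
qed



end
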